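(* Let $\alpha\ge4$. Then the Energy Distance $\mathcal{E}_\alpha$ is sub-additive by convex convolution: for every $\lambda\in(0,1)$ and all random vectors $X_1,X_2,Y_1,Y_2$ in $\mathbb{R}^n$ with $X_1$ independent of $X_2$ and $Y_1$ independent of $Y_2$ (such that all Energy Distances below are well defined), $$\mathcal{E}_\alpha(\sqrt{\lambda}X_1+\sqrt{1-\lambda}X_2,\sqrt{\lambda}Y_1+\sqrt{1-\lambda}Y_2)\le\sqrt{\lambda}\,\mathcal{E}_\alpha(X_1,Y_1)+\sqrt{1-\lambda}\,\mathcal{E}_\alpha(X_2,Y_2).$$
   Context: Random vectors are identified with their laws. For $\alpha>0$ and probability measures $\mu,\nu$ on $\mathbb{R}^n$ having equal moments up to some order $l\ge\lfloor\alpha/2\rfloor$, the Energy Distance $\mathcal{E}_\alpha(\mu,\nu)\ge0$ is defined by $(-1)^k\mathcal{E}_\alpha(\mu,\nu)^2=2\int_{\mathbb{R}^{2n}}|x-y|^\alpha d\mu(x)d\nu(y)-\int_{\mathbb{R}^{2n}}|x-y|^\alpha d\mu(x)d\mu(y)-\int_{\mathbb{R}^{2n}}|x-y|^\alpha d\nu(x)d\nu(y)$, where $k=\lfloor\alpha/2\rfloor$ and $|\cdot|$ is the Euclidean norm; it is well defined when these integrals are finite and the resulting value of $\mathcal{E}_\alpha^2$ is nonnegative. *)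

theory Defs
  imports "HOL-Probability.Probability"
begin

text \<open>Probability laws on R^n are modelled as measures on a Euclidean space 'a
  (whose norm is the Euclidean norm). A multi-index is a function
  beta :: 'a => nat on the basis vectors.\<close>

definition monomial :: "('a::euclidean_space \<Rightarrow> nat) \<Rightarrow> 'a \<Rightarrow> real" where
  "monomial \<beta> x = (\<Prod>b\<in>Basis. (x \<bullet> b) ^ (\<beta> b))"

definition equal_moments_upto :: "nat \<Rightarrow> 'a::euclidean_space measure \<Rightarrow> 'a measure \<Rightarrow> bool" where
  "equal_moments_upto l \<mu> \<nu> \<longleftrightarrow>
     (\<forall>\<beta>. (\<Sum>b\<in>Basis. \<beta> b) \<le> l \<longrightarrow>
        integrable \<mu> (monomial \<beta>) \<and> integrable \<nu> (monomial \<beta>) \<and>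
        (\<integral>x. monomial \<beta> x \<partial>\<mu>) = (\<integral>x. monomial \<beta> x \<partial>\<nu>))"

definition energy_kernel :: "real \<Rightarrow> 'a::euclidean_space \<times> 'a \<Rightarrow> real" where
  "energy_kernel \<alpha> p = norm (fst p - snd p) powr \<alpha>"

definition energy_int :: "real \<Rightarrow> 'a::euclidean_space measure \<Rightarrow> 'a measure \<Rightarrow> real" where
  "energy_int \<alpha> \<mu> \<nu> = (\<integral>p. energy_kernel \<alpha> p \<partial>(\<mu> \<Otimes>\<^sub>M \<nu>))"

definition energy_sq :: "real \<Rightarrow> 'a::euclidean_space measure \<Rightarrow> 'a measure \<Rightarrow> real" where
  "energy_sq \<alpha> \<mu> \<nu> = (-1) ^ nat \<lfloor>\<alpha> / 2\<rfloor> *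
     (2 * energy_int \<alpha> \<mu> \<nu> - energy_int \<alpha> \<mu> \<mu> - energy_int \<alpha> \<nu> \<nu>)"

definition energy_dist :: "real \<Rightarrow> 'a::euclidean_space measure \<Rightarrow> 'a measure \<Rightarrow> real" where
  "energy_dist \<alpha> \<mu> \<nu> = sqrt (energy_sq \<alpha> \<mu> \<nu>)"

definition energy_well_defined :: "real \<Rightarrow> 'a::euclidean_space measure \<Rightarrow> 'a measure \<Rightarrow> bool" where
  "energy_well_defined \<alpha> \<mu> \<nu> \<longleftrightarrow>
     prob_space \<mu> \<and> prob_space \<nu> \<and> sets \<mu> = sets borel \<and> sets \<nu> = sets borel \<and>
     (\<exists>l. l \<ge> nat \<lfloor>\<alpha> / 2\<rfloor> \<and> equal_moments_upto l \<mu> \<nu>) \<and>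
     integrable (\<mu> \<Otimes>\<^sub>M \<nu>) (energy_kernel \<alpha>) \<and>
     integrable (\<mu> \<Otimes>\<^sub>M \<mu>) (energy_kernel \<alpha>) \<and>
     integrable (\<nu> \<Otimes>\<^sub>M \<nu>) (energy_kernel \<alpha>) \<and>
     energy_sq \<alpha> \<mu> \<nu> \<ge> 0"

text \<open>Law of sqrt(lambda) X1 + sqrt(1-lambda) X2 for independent X1 ~ mu1, X2 ~ mu2.\<close>
definition conv_comb :: "real \<Rightarrow> 'a::euclidean_space measure \<Rightarrow> 'a measure \<Rightarrow> 'a measure" where
  "conv_comb lam \<mu>1 \<mu>2 = distr (\<mu>1 \<Otimes>\<^sub>M \<mu>2) borel
      (\<lambda>(x, y). sqrt lam *\<^sub>R x + sqrt (1 - lam) *\<^sub>R y)"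

end

theory Submission
  imports Defs
begin

definition mdeg :: "('a::euclidean_space \<Rightarrow> nat) \<Rightarrow> nat" where
  "mdeg \<beta> = (\<Sum>b\<in>(Basis::'a set). \<beta> b)"

definition mpoly_le :: "nat \<Rightarrow> ('a::euclidean_space \<Rightarrow> real) \<Rightarrow> bool" where
  "mpoly_le d p \<longleftrightarrow> (\<exists>F c. finite F \<and> (\<forall>\<beta>\<in>F. mdeg \<beta> \<le> d) \<and>
      (\<forall>x. p x = (\<Sum>\<beta>\<in>F. c \<beta> * monomial \<beta> x)))"

lemma mpoly_le_gen:
  fixes B :: "'i \<Rightarrow> ('a::euclidean_space \<Rightarrow> nat)"
  assumes "finite I" "\<And>i. i \<in> I \<Longrightarrow> mdeg (B i) \<le> d"
    and "\<And>x. p x = (\<Sum>i\<in>I. c i * monomial (B i) x)"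
  shows "mpoly_le d p"
  unfolding mpoly_le_def
proof (intro exI conjI allI ballI)
  show "finite (B ` I)" using assms(1) by simp
  show "mdeg \<beta> \<le> d" if "\<beta> \<in> B ` I" for \<beta> using that assms(2) by auto
  fix x
  have "p x = (\<Sum>\<beta>\<in>B ` I. \<Sum>i\<in>{i\<in>I. B i = \<beta>}. c i * monomial (B i) x)"
    using assms(3) sum.image_gen[OF assms(1), of "\<lambda>i. c i * monomial (B i) x" B] by simp
  also have "\<dots> = (\<Sum>\<beta>\<in>B ` I. (\<Sum>i\<in>{i\<in>I. B i = \<beta>}. c i) * monomial \<beta> x)"
    by (intro sum.cong refl) (auto simp: sum_distrib_right)
  finally show "p x = (\<Sum>\<beta>\<in>B ` I. (\<lambda>\<beta>. \<Sum>i\<in>{i\<in>I. B i = \<beta>}. c i) \<beta> * monomial \<beta> x)" .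
qed

lemma monomial_mult:
  "monomial \<beta> x * monomial \<gamma> x = monomial (\<lambda>b. \<beta> b + \<gamma> b) (x::'a::euclidean_space)"
  unfolding monomial_def by (simp add: power_add prod.distrib)

lemma mdeg_add: "mdeg (\<lambda>b. \<beta> b + \<gamma> b) = mdeg \<beta> + mdeg (\<gamma>::'a::euclidean_space \<Rightarrow> nat)"
  unfolding mdeg_def by (simp add: sum.distrib)

lemma mpoly_le_mono: "mpoly_le d p \<Longrightarrow> d \<le> d' \<Longrightarrow> mpoly_le d' p"
  unfolding mpoly_le_def by (meson order_trans)

lemma mpoly_le_const: "mpoly_le d (\<lambda>x::'a::euclidean_space. a)"
  by (rule mpoly_le_gen[where I="{()}" and B="\<lambda>_. \<lambda>_. 0" and c="\<lambda>_. a"])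
     (auto simp: mdeg_def monomial_def)

lemma mpoly_le_coord:
  assumes "b \<in> Basis" "1 \<le> d"
  shows "mpoly_le d (\<lambda>x::'a::euclidean_space. x \<bullet> b)"
proof (rule mpoly_le_gen[where I="{()}" and B="\<lambda>_. \<lambda>b'. if b' = b then 1 else 0" and c="\<lambda>_. 1"])
  show "finite {()}" by simp
  show "mdeg (\<lambda>b'. if b' = b then 1 else 0) \<le> d" for i :: unit
    using assms by (simp add: mdeg_def)
  fix x :: 'a
  have "monomial (\<lambda>b'. if b' = b then 1 else 0) x = (\<Prod>b'\<in>Basis. if b' = b then x \<bullet> b else 1)"
    unfolding monomial_def by (intro prod.cong) auto
  also have "\<dots> = x \<bullet> b" using assms(1) by (simp add: prod.delta)
  finally show "x \<bullet> b = (\<Sum>i\<in>{()}. 1 * monomial (\<lambda>b'. if b' = b then 1 else 0) x)" by simp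
qed

lemma mpoly_le_add:
  assumes "mpoly_le d p" "mpoly_le d q"
  shows "mpoly_le d (\<lambda>x. p x + q x)"
proof -
  obtain F c where F: "finite F" "\<forall>\<beta>\<in>F. mdeg \<beta> \<le> d" "\<forall>x. p x = (\<Sum>\<beta>\<in>F. c \<beta> * monomial \<beta> x)"
    using assms(1) unfolding mpoly_le_def by blast
  obtain G e where G: "finite G" "\<forall>\<beta>\<in>G. mdeg \<beta> \<le> d" "\<forall>x. q x = (\<Sum>\<beta>\<in>G. e \<beta> * monomial \<beta> x)"
    using assms(2) unfolding mpoly_le_def by blast
  show ?thesis
  proof (rule mpoly_le_gen[where I="F <+> G" and B="case_sum (\<lambda>\<beta>. \<beta>) (\<lambda>\<beta>. \<beta>)"
        and c="case_sum c e"])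
    show "finite (F <+> G)" using F G by simp
    show "mdeg (case_sum (\<lambda>\<beta>. \<beta>) (\<lambda>\<beta>. \<beta>) i) \<le> d" if "i \<in> F <+> G" for i
      using that F G by auto
    fix x
    show "p x + q x = (\<Sum>i\<in>F <+> G. case_sum c e i * monomial (case_sum (\<lambda>\<beta>. \<beta>) (\<lambda>\<beta>. \<beta>) i) x)"
      using F G by (simp add: sum.Plus)
  qed
qed

lemma mpoly_le_scale:
  assumes "mpoly_le d p"
  shows "mpoly_le d (\<lambda>x. a * p x)"
proof -
  obtain F c where F: "finite F" "\<forall>\<beta>\<in>F. mdeg \<beta> \<le> d" "\<forall>x. p x = (\<Sum>\<beta>\<in>F. c \<beta> * monomial \<beta> x)"
    using assms(1) unfolding mpoly_le_def by blast
  show ?thesis unfolding mpoly_le_def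
    by (rule exI[of _ F], rule exI[of _ "\<lambda>\<beta>. a * c \<beta>"])
       (use F in \<open>auto simp: sum_distrib_left mult.assoc\<close>)
qed

lemma mpoly_le_mult:
  assumes "mpoly_le d1 p" "mpoly_le d2 q"
  shows "mpoly_le (d1 + d2) (\<lambda>x. p x * q x)"
proof -
  obtain F c where F: "finite F" "\<forall>\<beta>\<in>F. mdeg \<beta> \<le> d1" "\<forall>x. p x = (\<Sum>\<beta>\<in>F. c \<beta> * monomial \<beta> x)"
    using assms(1) unfolding mpoly_le_def by blast
  obtain G e where G: "finite G" "\<forall>\<beta>\<in>G. mdeg \<beta> \<le> d2" "\<forall>x. q x = (\<Sum>\<beta>\<in>G. e \<beta> * monomial \<beta> x)"
    using assms(2) unfolding mpoly_le_def by blast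
  show ?thesis
  proof (rule mpoly_le_gen[where I="F \<times> G" and B="\<lambda>(\<beta>,\<gamma>). (\<lambda>b. \<beta> b + \<gamma> b)"
        and c="\<lambda>(\<beta>,\<gamma>). c \<beta> * e \<gamma>"])
    show "finite (F \<times> G)" using F G by simp
    show "mdeg ((\<lambda>(\<beta>,\<gamma>). (\<lambda>b. \<beta> b + \<gamma> b)) i) \<le> d1 + d2" if "i \<in> F \<times> G" for i
      using that F G by (auto simp: mdeg_add add_mono)
    fix x
    have "p x * q x = (\<Sum>\<beta>\<in>F. \<Sum>\<gamma>\<in>G. (c \<beta> * monomial \<beta> x) * (e \<gamma> * monomial \<gamma> x))"
      using F G by (simp add: sum_product)
    also have "\<dots> = (\<Sum>(\<beta>,\<gamma>)\<in>F \<times> G. (c \<beta> * e \<gamma>) * monomial (\<lambda>b. \<beta> b + \<gamma> b) x)"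
      by (simp add: sum.cartesian_product monomial_mult[symmetric] mult_ac)
    finally show "p x * q x = (\<Sum>i\<in>F \<times> G. (case i of (\<beta>, \<gamma>) \<Rightarrow> c \<beta> * e \<gamma>) *
          monomial (case i of (\<beta>, \<gamma>) \<Rightarrow> \<lambda>b. \<beta> b + \<gamma> b) x)"
      by (simp add: case_prod_beta')
  qed
qed

lemma mpoly_le_prod:
  assumes "finite S" "\<And>i. i \<in> S \<Longrightarrow> mpoly_le (d i) (p i)"
  shows "mpoly_le (\<Sum>i\<in>S. d i) (\<lambda>x. \<Prod>i\<in>S. p i x)"
  using assms
proof (induction S rule: finite_induct)
  case empty then show ?case by (simp add: mpoly_le_const)
next
  case (insert a S)
  then show ?case by (simp add: mpoly_le_mult)
qed

lemma mpoly_le_power: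
  assumes "mpoly_le d p"
  shows "mpoly_le (m * d) (\<lambda>x. p x ^ m)"
  using mpoly_le_prod[of "{..<m}" "\<lambda>_. d" "\<lambda>_. p"] assms by simp

lemma mpoly_le_sum:
  assumes "finite S" "\<And>i. i \<in> S \<Longrightarrow> mpoly_le d (p i)"
  shows "mpoly_le d (\<lambda>x. \<Sum>i\<in>S. p i x)"
  using assms
proof (induction S rule: finite_induct)
  case empty then show ?case by (simp add: mpoly_le_const)
next
  case (insert a S)
  then show ?case by (simp add: mpoly_le_add)
qed

lemma mpoly_le_monomial: "mpoly_le (mdeg \<beta>) (monomial \<beta>)"
  unfolding mpoly_le_def by (rule exI[of _ "{\<beta>}"], rule exI[of _ "\<lambda>_. 1"]) auto

lemma mpoly_le_affine:
  assumes "mpoly_le d p"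
  shows "mpoly_le d (\<lambda>x. p (a *\<^sub>R x + q))"
proof -
  obtain F c where F: "finite F" "\<forall>\<beta>\<in>F. mdeg \<beta> \<le> d" "\<forall>x. p x = (\<Sum>\<beta>\<in>F. c \<beta> * monomial \<beta> x)"
    using assms(1) unfolding mpoly_le_def by blast
  have mon: "mpoly_le (mdeg \<beta>) (\<lambda>x. monomial \<beta> (a *\<^sub>R x + q))" for \<beta>
  proof -
    have lin: "mpoly_le 1 (\<lambda>x. a * (x \<bullet> b) + q \<bullet> b)" if "b \<in> Basis" for b
      by (intro mpoly_le_add mpoly_le_scale mpoly_le_coord mpoly_le_const that) simp
    have "mpoly_le (\<Sum>b\<in>Basis. \<beta> b * 1) (\<lambda>x. \<Prod>b\<in>Basis. (a * (x \<bullet> b) + q \<bullet> b) ^ \<beta> b)"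
      by (intro mpoly_le_prod mpoly_le_power lin) auto
    then show ?thesis
      by (simp add: monomial_def mdeg_def inner_add_left)
  qed
  have "mpoly_le d (\<lambda>x. \<Sum>\<beta>\<in>F. c \<beta> * monomial \<beta> (a *\<^sub>R x + q))"
    by (intro mpoly_le_sum mpoly_le_scale F(1)) (use mon F(2) mpoly_le_mono in blast)
  then show ?thesis using F(3) by simp
qed

lemma monomial_measurable[measurable]: "monomial \<beta> \<in> borel_measurable (borel :: 'a::euclidean_space measure)"
  unfolding monomial_def by measurable

lemma abs_monomial_le: "\<bar>monomial \<beta> (u::'a::euclidean_space)\<bar> \<le> norm u ^ mdeg \<beta>"
proof -
  have "\<bar>monomial \<beta> u\<bar> = (\<Prod>b\<in>Basis. \<bar>u \<bullet> b\<bar> ^ \<beta> b)"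
    unfolding monomial_def by (simp add: abs_prod power_abs)
  also have "\<dots> \<le> (\<Prod>b\<in>(Basis::'a set). norm u ^ \<beta> b)"
    by (intro prod_mono conjI power_mono) (auto simp: Basis_le_norm)
  also have "\<dots> = norm u ^ mdeg \<beta>"
    by (simp add: mdeg_def power_sum)
  finally show ?thesis .
qed

lemma pow_le_one_plus_powr:
  assumes "real m \<le> \<alpha>" "0 \<le> r"
  shows "r ^ m \<le> 1 + r powr \<alpha>"
proof (cases "r \<le> 1")
  case True
  then have "r ^ m \<le> 1" using assms by (simp add: power_le_one)
  then show ?thesis by (smt (verit) powr_ge_zero)
next
  case False
  then have "r ^ m = r powr m" using assms by (simp add: powr_realpow)
  also have "\<dots> \<le> r powr \<alpha>" using False assms by (intro powr_mono) auto
  finally show ?thesis by simp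
qed

lemma integrable_monomial_comp:
  assumes "prob_space M" "f \<in> borel_measurable M"
    "integrable M (\<lambda>x. norm (f x) powr \<alpha>)" "real (mdeg \<beta>) \<le> \<alpha>"
  shows "integrable M (\<lambda>x. monomial \<beta> (f x))"
proof (rule Bochner_Integration.integrable_bound)
  interpret prob_space M by fact
  show "integrable M (\<lambda>x. 1 + norm (f x) powr \<alpha>)"
    using assms(3) by simp
  show "(\<lambda>x. monomial \<beta> (f x)) \<in> borel_measurable M"
    using assms(2) by measurable
  show "AE x in M. norm (monomial \<beta> (f x)) \<le> norm (1 + norm (f x) powr \<alpha>)"
  proof (intro AE_I2)
    fix x
    have "\<bar>monomial \<beta> (f x)\<bar> \<le> norm (f x) ^ mdeg \<beta>" by (rule abs_monomial_le)
    also have "\<dots> \<le> 1 + norm (f x) powr \<alpha>" using assms(4) by (intro pow_le_one_plus_powr) auto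
    finally show "norm (monomial \<beta> (f x)) \<le> norm (1 + norm (f x) powr \<alpha>)" by simp
  qed
qed

lemma integrable_mpoly_comp:
  assumes "prob_space M" "f \<in> borel_measurable M"
    "integrable M (\<lambda>x. norm (f x) powr \<alpha>)" "real d \<le> \<alpha>" "mpoly_le d p"
  shows "integrable M (\<lambda>x. p (f x))"
proof -
  obtain F c where F: "finite F" "\<forall>\<beta>\<in>F. mdeg \<beta> \<le> d" "\<forall>x. p x = (\<Sum>\<beta>\<in>F. c \<beta> * monomial \<beta> x)"
    using assms(5) unfolding mpoly_le_def by blast
  have "integrable M (\<lambda>x. \<Sum>\<beta>\<in>F. c \<beta> * monomial \<beta> (f x))"
    using F(2) assms(4) by (intro Bochner_Integration.integrable_sum integrable_mult_right integrable_monomial_comp[OF assms(1-3)]) auto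
  then show ?thesis using F(3) by simp
qed

lemma mpoly_measurable:
  assumes "mpoly_le d p"
  shows "p \<in> borel_measurable borel"
proof -
  obtain F c where F: "finite F" "\<forall>x. p x = (\<Sum>\<beta>\<in>F. c \<beta> * monomial \<beta> x)"
    using assms unfolding mpoly_le_def by blast
  have "(\<lambda>x. \<Sum>\<beta>\<in>F. c \<beta> * monomial \<beta> x) \<in> borel_measurable borel" by measurable
  moreover have "p = (\<lambda>x. \<Sum>\<beta>\<in>F. c \<beta> * monomial \<beta> x)" using F by auto
  ultimately show ?thesis by simp
qed

lemma equal_moments_mpoly:
  assumes "equal_moments_upto l \<mu> \<nu>" "d \<le> l" "mpoly_le d p"
  shows "(\<integral>x. p x \<partial>\<mu>) = (\<integral>x. p x \<partial>\<nu>)"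
proof -
  obtain F c where F: "finite F" "\<forall>\<beta>\<in>F. mdeg \<beta> \<le> d" "\<forall>x. p x = (\<Sum>\<beta>\<in>F. c \<beta> * monomial \<beta> x)"
    using assms(3) unfolding mpoly_le_def by blast
  have m: "integrable \<mu> (monomial \<beta>) \<and> integrable \<nu> (monomial \<beta>) \<and>
        (\<integral>x. monomial \<beta> x \<partial>\<mu>) = (\<integral>x. monomial \<beta> x \<partial>\<nu>)" if "\<beta> \<in> F" for \<beta>
    using assms(1) F(2) that assms(2) unfolding equal_moments_upto_def mdeg_def by force
  have "(\<integral>x. p x \<partial>\<mu>) = (\<integral>x. (\<Sum>\<beta>\<in>F. c \<beta> * monomial \<beta> x) \<partial>\<mu>)" using F(3) by simp
  also have "\<dots> = (\<Sum>\<beta>\<in>F. c \<beta> * (\<integral>x. monomial \<beta> x \<partial>\<mu>))"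
    using m by (subst Bochner_Integration.integral_sum) auto
  also have "\<dots> = (\<Sum>\<beta>\<in>F. c \<beta> * (\<integral>x. monomial \<beta> x \<partial>\<nu>))"
    using m by simp
  also have "\<dots> = (\<integral>x. (\<Sum>\<beta>\<in>F. c \<beta> * monomial \<beta> x) \<partial>\<nu>)"
    using m by (subst Bochner_Integration.integral_sum) auto
  also have "\<dots> = (\<integral>x. p x \<partial>\<nu>)" using F(3) by simp
  finally show ?thesis .
qed

lemma norm_pow_expand:
  fixes dummy :: "'a::euclidean_space"
  shows
  "\<exists>(T::(nat \<Rightarrow> 'a \<times> nat) set) A B da db. finite T \<and>
     (\<forall>t\<in>T. mpoly_le (da t) (A t) \<and> mpoly_le (db t) (B t) \<and> da t + db t = 2 * l) \<and>
     (\<forall>u v::'a. norm (u - v) ^ (2 * l) = (\<Sum>t\<in>T. A t u * B t v))"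
proof -
  define J where "J = (Basis::'a set) \<times> {0,1,2::nat}"
  define a :: "'a \<times> nat \<Rightarrow> 'a \<Rightarrow> real" where "a = (\<lambda>(b,j) (u::'a). if j = 0 then (u \<bullet> b)^2 else if j = 1 then -2 * (u \<bullet> b) else 1)"
  define bb :: "'a \<times> nat \<Rightarrow> 'a \<Rightarrow> real" where "bb = (\<lambda>(b,j) (v::'a). if j = 0 then 1 else if j = 1 then v \<bullet> b else (v \<bullet> b)^2)"
  define dA where "dA = (\<lambda>(b::'a,j::nat). 2 - j)"
  define dB where "dB = (\<lambda>(b::'a,j::nat). j)"
  have finJ: "finite J" unfolding J_def by simp
  have pa: "mpoly_le (dA j) (a j) \<and> mpoly_le (dB j) (bb j) \<and> dA j + dB j = 2" if "j \<in> J" for j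
  proof -
    obtain b i where j: "j = (b,i)" "b \<in> Basis" "i \<in> {0,1,2}" using \<open>j \<in> J\<close> unfolding J_def by auto
    have c1: "mpoly_le 1 (\<lambda>x::'a. x \<bullet> b)" using j by (intro mpoly_le_coord) auto
    have c2: "mpoly_le 2 (\<lambda>x::'a. (x \<bullet> b)^2)" using mpoly_le_power[OF c1, of 2] by simp
    show ?thesis
    proof (cases "i = 0")
      case True then show ?thesis using j c2 by (simp add: a_def bb_def dA_def dB_def mpoly_le_const)
    next
      case False
      show ?thesis
      proof (cases "i = 1")
        case True then show ?thesis using j c1 mpoly_le_scale[OF c1, of "-2"]
          by (simp add: a_def bb_def dA_def dB_def mpoly_le_const)
      next
        case False
        then have "i = 2" using j \<open>i \<noteq> 0\<close> by auto
        then show ?thesis using j c2 by (simp add: a_def bb_def dA_def dB_def mpoly_le_const)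
      qed
    qed
  qed
  have sq: "norm (u - v) ^ 2 = (\<Sum>j\<in>J. a j u * bb j v)" for u v :: 'a
  proof -
    have "norm (u - v) ^ 2 = (\<Sum>b\<in>Basis. ((u - v) \<bullet> b)^2)"
      unfolding power2_norm_eq_inner by (subst euclidean_inner) (simp add: power2_eq_square)
    also have "\<dots> = (\<Sum>b\<in>Basis. \<Sum>i\<in>{0,1,2::nat}. a (b,i) u * bb (b,i) v)"
      by (intro sum.cong refl) (simp add: a_def bb_def inner_diff_left power2_eq_square algebra_simps)
    also have "\<dots> = (\<Sum>(b,i)\<in>Basis \<times> {0,1,2::nat}. a (b,i) u * bb (b,i) v)"
      by (rule sum.cartesian_product)
    also have "\<dots> = (\<Sum>j\<in>J. a j u * bb j v)"
      unfolding J_def by (simp add: split_def)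
    finally show ?thesis .
  qed
  define T where "T = PiE {..<l} (\<lambda>_. J)"
  define A where "A = (\<lambda>t u. \<Prod>i<l. a (t i) u)"
  define B where "B = (\<lambda>t v. \<Prod>i<l. bb (t i) v)"
  define da where "da = (\<lambda>t. \<Sum>i<l. dA (t i))"
  define db where "db = (\<lambda>t. \<Sum>i<l. dB (t i))"
  have "finite T" unfolding T_def using finJ by (simp add: finite_PiE)
  moreover have "\<forall>t\<in>T. mpoly_le (da t) (A t) \<and> mpoly_le (db t) (B t) \<and> da t + db t = 2 * l"
  proof
    fix t assume t: "t \<in> T"
    then have tJ: "t i \<in> J" if "i < l" for i using that unfolding T_def by auto
    have "mpoly_le (\<Sum>i<l. dA (t i)) (\<lambda>u. \<Prod>i<l. a (t i) u)"
      using tJ pa by (intro mpoly_le_prod) auto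
    moreover have "mpoly_le (\<Sum>i<l. dB (t i)) (\<lambda>v. \<Prod>i<l. bb (t i) v)"
      using tJ pa by (intro mpoly_le_prod) auto
    moreover have "(\<Sum>i<l. dA (t i)) + (\<Sum>i<l. dB (t i)) = (\<Sum>i<l. 2::nat)"
      by (subst sum.distrib[symmetric]) (intro sum.cong refl, use tJ pa in auto)
    ultimately show "mpoly_le (da t) (A t) \<and> mpoly_le (db t) (B t) \<and> da t + db t = 2 * l"
      unfolding A_def B_def da_def db_def by simp
  qed
  moreover have "\<forall>u v::'a. norm (u - v) ^ (2 * l) = (\<Sum>t\<in>T. A t u * B t v)"
  proof (intro allI)
    fix u v :: 'a
    have "norm (u - v) ^ (2 * l) = (\<Prod>i<l. \<Sum>j\<in>J. a j u * bb j v)"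
      by (simp add: power_mult sq)
    also have "\<dots> = (\<Sum>t\<in>T. \<Prod>i<l. a (t i) u * bb (t i) v)"
      unfolding T_def using finJ by (subst prod_sum_PiE) auto
    also have "\<dots> = (\<Sum>t\<in>T. A t u * B t v)"
      by (simp add: prod.distrib A_def B_def)
    finally show "norm (u - v) ^ (2 * l) = (\<Sum>t\<in>T. A t u * B t v)" .
  qed
  ultimately show ?thesis
    by (intro exI[of _ T] exI[of _ A] exI[of _ B] exI[of _ da] exI[of _ db]) simp
qed

definition Jint :: "real \<Rightarrow> 'b measure \<Rightarrow> ('b \<Rightarrow> 'a::euclidean_space) \<Rightarrow> 'b measure \<Rightarrow> ('b \<Rightarrow> 'a) \<Rightarrow> real" where
  "Jint \<alpha> M f N g = (\<integral>p. norm (f (fst p) - g (snd p)) powr \<alpha> \<partial>(M \<Otimes>\<^sub>M N))"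

lemma powr_add_bound:
  fixes a b \<alpha> :: real
  assumes "0 \<le> a" "0 \<le> b" "0 \<le> \<alpha>"
  shows "(a + b) powr \<alpha> \<le> 2 powr \<alpha> * (a powr \<alpha> + b powr \<alpha>)"
proof -
  have "(a + b) powr \<alpha> \<le> (2 * max a b) powr \<alpha>"
    using assms by (intro powr_mono2) auto
  also have "\<dots> = 2 powr \<alpha> * max a b powr \<alpha>"
    using assms by (simp add: powr_mult)
  also have "max a b powr \<alpha> \<le> a powr \<alpha> + b powr \<alpha>"
    by (cases "a \<le> b") (auto simp: max_def)
  then have "2 powr \<alpha> * max a b powr \<alpha> \<le> 2 powr \<alpha> * (a powr \<alpha> + b powr \<alpha>)"
    by (intro mult_left_mono) auto
  finally show ?thesis .
qed

lemma norm_diff_powr_bound: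
  assumes "0 \<le> \<alpha>"
  shows "norm (u - v) powr \<alpha> \<le> 2 powr \<alpha> * (norm u powr \<alpha> + norm v powr \<alpha>)"
proof -
  have "norm (u - v) powr \<alpha> \<le> (norm u + norm v) powr \<alpha>"
    using assms by (intro powr_mono2) (auto simp: norm_triangle_ineq4)
  also have "\<dots> \<le> 2 powr \<alpha> * (norm u powr \<alpha> + norm v powr \<alpha>)"
    using assms by (intro powr_add_bound) auto
  finally show ?thesis .
qed

lemma
  assumes "prob_space M" "prob_space N" "integrable M f" "integrable N (g :: _ \<Rightarrow> real)"
  shows integrable_pair_mult: "integrable (M \<Otimes>\<^sub>M N) (\<lambda>p. f (fst p) * g (snd p))"
    and integral_pair_mult: "(\<integral>p. f (fst p) * g (snd p) \<partial>(M \<Otimes>\<^sub>M N)) = (\<integral>x. f x \<partial>M) * (\<integral>y. g y \<partial>N)"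
proof -
  interpret M: prob_space M by fact
  interpret N: prob_space N by fact
  interpret pair_sigma_finite M N
    by (simp add: M.sigma_finite_measure_axioms N.sigma_finite_measure_axioms pair_sigma_finite.intro)
  have mf[measurable]: "f \<in> borel_measurable M" using assms(3) by auto
  have mg[measurable]: "g \<in> borel_measurable N" using assms(4) by auto
  show int: "integrable (M \<Otimes>\<^sub>M N) (\<lambda>p. f (fst p) * g (snd p))"
  proof (rule Fubini_integrable)
    show "(\<lambda>p. f (fst p) * g (snd p)) \<in> borel_measurable (M \<Otimes>\<^sub>M N)" by measurable
    have "integrable M (\<lambda>x. norm (f x) * (\<integral>y. norm (g y) \<partial>N))"
      using assms(3) by (intro integrable_mult_left) auto
    then show "integrable M (\<lambda>x. \<integral>y. norm (f (fst (x, y)) * g (snd (x, y))) \<partial>N)"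
      by (simp add: abs_mult)
    show "AE x in M. integrable N (\<lambda>y. f (fst (x, y)) * g (snd (x, y)))"
      using assms(4) by auto
  qed
  have "(\<integral>p. f (fst p) * g (snd p) \<partial>(M \<Otimes>\<^sub>M N)) = (\<integral>x. (\<integral>y. f x * g y \<partial>N) \<partial>M)"
    using integral_fst'[OF int] by simp
  also have "\<dots> = (\<integral>x. f x * (\<integral>y. g y \<partial>N) \<partial>M)" by simp
  also have "\<dots> = (\<integral>x. f x \<partial>M) * (\<integral>y. g y \<partial>N)" by simp
  finally show "(\<integral>p. f (fst p) * g (snd p) \<partial>(M \<Otimes>\<^sub>M N)) = (\<integral>x. f x \<partial>M) * (\<integral>y. g y \<partial>N)" .
qed

lemma integrable_J:
  fixes f g :: "'b \<Rightarrow> 'a::euclidean_space"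
  assumes "prob_space M" "prob_space N" "f \<in> borel_measurable M" "g \<in> borel_measurable N"
    "integrable M (\<lambda>x. norm (f x) powr \<alpha>)" "integrable N (\<lambda>x. norm (g x) powr \<alpha>)" "0 \<le> \<alpha>"
  shows "integrable (M \<Otimes>\<^sub>M N) (\<lambda>p. norm (f (fst p) - g (snd p)) powr \<alpha>)"
proof (rule Bochner_Integration.integrable_bound)
  interpret M: prob_space M by fact
  interpret N: prob_space N by fact
  have i1: "integrable (M \<Otimes>\<^sub>M N) (\<lambda>p. norm (f (fst p)) powr \<alpha> * 1)"
    by (rule integrable_pair_mult) (use assms in auto)
  have i2: "integrable (M \<Otimes>\<^sub>M N) (\<lambda>p. 1 * norm (g (snd p)) powr \<alpha>)"
    by (rule integrable_pair_mult) (use assms in auto)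
  show "integrable (M \<Otimes>\<^sub>M N) (\<lambda>p. 2 powr \<alpha> * (norm (f (fst p)) powr \<alpha> + norm (g (snd p)) powr \<alpha>))"
    using i1 i2 by auto
  note [measurable] = assms(3,4)
  show "(\<lambda>p. norm (f (fst p) - g (snd p)) powr \<alpha>) \<in> borel_measurable (M \<Otimes>\<^sub>M N)"
    by measurable
  show "AE p in M \<Otimes>\<^sub>M N. norm (norm (f (fst p) - g (snd p)) powr \<alpha>)
      \<le> norm (2 powr \<alpha> * (norm (f (fst p)) powr \<alpha> + norm (g (snd p)) powr \<alpha>))"
    using norm_diff_powr_bound[OF assms(7)] by (intro AE_I2) auto
qed

lemma Jint_sym:
  fixes f g :: "'b \<Rightarrow> 'a::euclidean_space"
  assumes "prob_space M" "prob_space N" "f \<in> borel_measurable M" "g \<in> borel_measurable N"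
  shows "Jint \<alpha> M f N g = Jint \<alpha> N g M f"
proof -
  interpret M: prob_space M by fact
  interpret N: prob_space N by fact
  interpret pair_sigma_finite N M
    by (simp add: M.sigma_finite_measure_axioms N.sigma_finite_measure_axioms pair_sigma_finite.intro)
  note [measurable] = assms(3,4)
  define F where "F = (\<lambda>p. norm (f (snd p) - g (fst p)) powr \<alpha>)"
  have mF: "F \<in> borel_measurable (N \<Otimes>\<^sub>M M)" unfolding F_def by measurable
  have "Jint \<alpha> N g M f = integral\<^sup>L (N \<Otimes>\<^sub>M M) F"
    unfolding Jint_def F_def by (simp add: norm_minus_commute)
  also have "\<dots> = (\<integral>(x,y). F (y,x) \<partial>(M \<Otimes>\<^sub>M N))"
    using integral_product_swap[OF mF] by simp
  also have "\<dots> = Jint \<alpha> M f N g"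
    unfolding Jint_def F_def by (simp add: case_prod_beta')
  finally show ?thesis by simp
qed

lemma energy_int_distr:
  assumes "prob_space M" "prob_space N" "f \<in> M \<rightarrow>\<^sub>M borel" "g \<in> N \<rightarrow>\<^sub>M borel"
  shows "energy_int \<alpha> (distr M borel f) (distr N borel g) = Jint \<alpha> M f N g"
proof -
  interpret M: prob_space M by fact
  interpret N: prob_space N by fact
  have "prob_space (distr N borel g)" using assms(4) by (simp add: N.prob_space_distr)
  then have sf: "sigma_finite_measure (distr N borel g)" by (simp add: prob_space_imp_sigma_finite)
  have "distr M borel f \<Otimes>\<^sub>M distr N borel g = distr (M \<Otimes>\<^sub>M N) (borel \<Otimes>\<^sub>M borel) (\<lambda>(x, y). (f x, g y))"
    by (rule pair_measure_distr[OF assms(3,4) sf])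
  then have "energy_int \<alpha> (distr M borel f) (distr N borel g) =
      (\<integral>p. energy_kernel \<alpha> p \<partial>distr (M \<Otimes>\<^sub>M N) (borel \<Otimes>\<^sub>M borel) (\<lambda>(x, y). (f x, g y)))"
    unfolding energy_int_def by simp
  also have "\<dots> = (\<integral>p. energy_kernel \<alpha> ((\<lambda>(x, y). (f x, g y)) p) \<partial>(M \<Otimes>\<^sub>M N))"
    by (rule integral_distr) (use assms(3,4) in \<open>measurable, auto simp: energy_kernel_def\<close>)
  also have "\<dots> = Jint \<alpha> M f N g"
    unfolding Jint_def energy_kernel_def by (simp add: case_prod_beta')
  finally show ?thesis .
qed

lemma exp_partial_le:
  fixes x :: real
  assumes "0 \<le> x"
  shows "(\<Sum>m<n. x ^ m / fact m) \<le> exp x"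
proof -
  have s: "(\<lambda>m. x ^ m / fact m) sums exp x"
    using exp_converges[of x] by (simp add: divide_inverse mult.commute)
  have "(\<Sum>m<n. x ^ m / fact m) \<le> (\<Sum>m. x ^ m / fact m)"
    by (rule sum_le_suminf) (use s assms in \<open>auto simp: sums_summable\<close>)
  also have "\<dots> = exp x" using s by (simp add: sums_unique[symmetric])
  finally show ?thesis .
qed

lemma pow_div_fact_le_exp:
  fixes x :: real
  assumes "0 \<le> x"
  shows "x ^ m / fact m \<le> exp x"
proof -
  have "x ^ m / fact m \<le> (\<Sum>j<Suc m. x ^ j / fact j)"
    by (rule member_le_sum) (use assms in auto)
  also have "\<dots> \<le> exp x" by (rule exp_partial_le[OF assms])
  finally show ?thesis .
qed

definition gfeat :: "real \<Rightarrow> (nat \<Rightarrow> 'a::euclidean_space) \<Rightarrow> nat \<Rightarrow> 'a \<Rightarrow> real" where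
  "gfeat s t m u = exp (- s * norm u ^ 2) * (\<Prod>i<m. u \<bullet> t i)"

lemma gfeat_measurable[measurable]: "gfeat s t m \<in> borel_measurable borel"
  unfolding gfeat_def by measurable

lemma gfeat_bound:
  assumes "0 < s" "\<And>i. i < m \<Longrightarrow> t i \<in> Basis"
  shows "\<bar>gfeat s t m u\<bar> \<le> 1 + fact m / s ^ m"
proof -
  define r where "r = norm u"
  have r0: "0 \<le> r" unfolding r_def by simp
  have "\<bar>\<Prod>i<m. u \<bullet> t i\<bar> = (\<Prod>i<m. \<bar>u \<bullet> t i\<bar>)" by (simp add: abs_prod)
  also have "\<dots> \<le> (\<Prod>i<m. r)"
    by (intro prod_mono) (use assms(2) in \<open>auto simp: r_def Basis_le_norm\<close>)
  finally have p: "\<bar>\<Prod>i<m. u \<bullet> t i\<bar> \<le> r ^ m" by simp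
  have e: "exp (- s * r ^ 2) * (r ^ 2) ^ m \<le> fact m / s ^ m"
  proof -
    have "(s * r^2) ^ m / fact m \<le> exp (s * r ^ 2)"
      using assms(1) by (intro pow_div_fact_le_exp) auto
    then have "s ^ m * (r ^ 2) ^ m \<le> fact m * exp (s * r^2)"
      by (simp add: field_simps power_mult_distrib)
    then have "exp (- s * r ^ 2) * (s ^ m * (r ^ 2) ^ m) \<le> exp (- s * r ^ 2) * (fact m * exp (s * r^2))"
      by (intro mult_left_mono) auto
    also have "\<dots> = fact m" by (simp add: exp_minus_inverse mult.commute[of _ "exp _"] exp_minus)
    finally have "s ^ m * (exp (- s * r ^ 2) * (r ^ 2) ^ m) \<le> fact m" by (simp add: mult_ac)
    then show ?thesis using assms(1) by (simp add: field_simps)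
  qed
  have sq: "(r ^ 2) ^ m = r ^ m * r ^ m" by (simp add: power2_eq_square power_mult_distrib)
  have "r ^ m \<le> 1 + (r ^ 2) ^ m"
  proof (cases "r \<le> 1")
    case True
    then have "r ^ m \<le> 1" using r0 by (simp add: power_le_one)
    then show ?thesis unfolding sq
      using mult_nonneg_nonneg[OF zero_le_power[OF r0, of m] zero_le_power[OF r0, of m]] by linarith
  next
    case False
    then have "1 \<le> r ^ m" by (intro one_le_power) auto
    then have "r ^ m \<le> r ^ m * r ^ m" using mult_left_mono[of 1 "r^m" "r^m"] by simp
    then show ?thesis by (simp add: sq)
  qed
  have "\<bar>gfeat s t m u\<bar> = exp (- s * r ^ 2) * \<bar>\<Prod>i<m. u \<bullet> t i\<bar>"
    unfolding gfeat_def r_def by (simp add: abs_mult)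
  also have "\<dots> \<le> exp (- s * r ^ 2) * (1 + (r ^ 2) ^ m)"
    using p \<open>r ^ m \<le> 1 + (r ^ 2) ^ m\<close> by (intro mult_left_mono) auto
  also have "\<dots> = exp (- s * r ^ 2) + exp (- s * r ^ 2) * (r ^ 2) ^ m" by (simp add: algebra_simps)
  also have "\<dots> \<le> 1 + fact m / s ^ m"
    using e assms(1) r0 by (intro add_mono) auto
  finally show ?thesis .
qed

lemma inner_power_expand:
  fixes u v :: "'a::euclidean_space"
  shows "(u \<bullet> v) ^ m = (\<Sum>t\<in>PiE {..<m} (\<lambda>_. Basis). (\<Prod>i<m. u \<bullet> t i) * (\<Prod>i<m. v \<bullet> t i))"
proof -
  have "(u \<bullet> v) ^ m = (\<Prod>i<m. \<Sum>b\<in>Basis. u \<bullet> b * (v \<bullet> b))"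
    by (simp add: euclidean_inner[of u v])
  also have "\<dots> = (\<Sum>t\<in>PiE {..<m} (\<lambda>_. Basis). \<Prod>i<m. u \<bullet> t i * (v \<bullet> t i))"
    by (subst prod_sum_PiE) auto
  also have "\<dots> = (\<Sum>t\<in>PiE {..<m} (\<lambda>_. Basis). (\<Prod>i<m. u \<bullet> t i) * (\<Prod>i<m. v \<bullet> t i))"
    by (simp add: prod.distrib)
  finally show ?thesis .
qed

lemma norm_diff_sq: "norm (u - v) ^ 2 = norm u ^ 2 - 2 * (u \<bullet> v) + norm (v::'a::real_inner) ^ 2"
  by (simp add: power2_norm_eq_inner inner_diff_left inner_diff_right inner_commute)

lemma gauss_pair_sums:
  fixes f g :: "'b \<Rightarrow> 'a::euclidean_space"
  assumes "prob_space M" "prob_space N" "f \<in> borel_measurable M" "g \<in> borel_measurable N" "0 < s"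
  shows "(\<lambda>m. (2 * s)^m / fact m * (\<Sum>t\<in>PiE {..<m} (\<lambda>_. Basis).
            (\<integral>x. gfeat s t m (f x) \<partial>M) * (\<integral>y. gfeat s t m (g y) \<partial>N)))
         sums (\<integral>p. exp (- s * norm (f (fst p) - g (snd p)) ^ 2) \<partial>(M \<Otimes>\<^sub>M N))"
proof -
  interpret M: prob_space M by fact
  interpret N: prob_space N by fact
  interpret P: pair_prob_space M N by unfold_locales
  note [measurable] = assms(3,4)
  define T where "T = (\<lambda>m::nat. PiE {..<m} (\<lambda>_. (Basis::'a set)))"
  define H where "H = (\<lambda>m p. (2 * s)^m / fact m * (exp (- s * norm (f (fst p)) ^ 2) *
      exp (- s * norm (g (snd p)) ^ 2) * (f (fst p) \<bullet> g (snd p)) ^ m))"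
  have Hm[measurable]: "H m \<in> borel_measurable (M \<Otimes>\<^sub>M N)" for m unfolding H_def by measurable
  have Hsum: "H m p = (2 * s)^m / fact m * (\<Sum>t\<in>T m. gfeat s t m (f (fst p)) * gfeat s t m (g (snd p)))" for m p
    unfolding H_def gfeat_def T_def inner_power_expand sum_distrib_left
    by (intro arg_cong[where f="\<lambda>x. _ * x"] sum.cong refl) (simp add: algebra_simps)
  have bound: "(\<Sum>m<n. \<bar>H m p\<bar>) \<le> 1" for n p
  proof -
    define u where "u = f (fst p)"
    define v where "v = g (snd p)"
    define x where "x = 2 * s * \<bar>u \<bullet> v\<bar>"
    have x0: "0 \<le> x" unfolding x_def using assms(5) by simp
    have "(\<Sum>m<n. \<bar>H m p\<bar>) = exp (- s * norm u ^ 2) * exp (- s * norm v ^ 2) * (\<Sum>m<n. x ^ m / fact m)"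
      unfolding H_def u_def[symmetric] v_def[symmetric] x_def sum_distrib_left
      by (intro sum.cong refl) (use assms(5) in \<open>simp add: abs_mult power_abs power_mult_distrib field_simps\<close>)
    also have "\<dots> \<le> exp (- s * norm u ^ 2) * exp (- s * norm v ^ 2) * exp x"
      by (intro mult_left_mono exp_partial_le x0) auto
    also have "\<dots> = exp (- s * norm u ^ 2 + - s * norm v ^ 2 + x)" by (simp only: exp_add)
    also have "\<dots> \<le> exp 0"
    proof -
      have cs: "\<bar>u \<bullet> v\<bar> \<le> norm u * norm v" by (rule Cauchy_Schwarz_ineq2)
      have sq: "2 * (norm u * norm v) \<le> norm u ^ 2 + norm v ^ 2"
        using sum_squares_bound[of "norm u" "norm v"] by (simp add: mult.assoc)
      have "x \<le> s * (2 * (norm u * norm v))"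
        unfolding x_def using mult_left_mono[OF cs, of "2 * s"] assms(5) by (simp add: mult_ac)
      also have "\<dots> \<le> s * (norm u ^ 2 + norm v ^ 2)"
        by (rule mult_left_mono[OF sq]) (use assms(5) in simp)
      finally have "x \<le> s * norm u ^ 2 + s * norm v ^ 2" by (simp add: distrib_left)
      then show ?thesis by simp
    qed
    finally show ?thesis by simp
  qed
  have Hb: "\<bar>H m p\<bar> \<le> 1" for m p
  proof -
    have "\<bar>H m p\<bar> \<le> (\<Sum>m'<Suc m. \<bar>H m' p\<bar>)" by (rule member_le_sum) auto
    then show ?thesis using bound[of p "Suc m"] by linarith
  qed
  have ptw: "(\<lambda>m. H m p) sums exp (- s * norm (f (fst p) - g (snd p)) ^ 2)" for p
  proof -
    define u where "u = f (fst p)"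
    define v where "v = g (snd p)"
    have "(\<lambda>m. (2 * s * (u \<bullet> v)) ^ m / fact m) sums exp (2 * s * (u \<bullet> v))"
      using exp_converges[of "2 * s * (u \<bullet> v)"] by (simp add: divide_inverse mult.commute)
    then have "(\<lambda>m. exp (- s * norm u ^ 2) * exp (- s * norm v ^ 2) * ((2 * s * (u \<bullet> v)) ^ m / fact m))
        sums (exp (- s * norm u ^ 2) * exp (- s * norm v ^ 2) * exp (2 * s * (u \<bullet> v)))"
      by (rule sums_mult)
    moreover have "exp (- s * norm u ^ 2) * exp (- s * norm v ^ 2) * exp (2 * s * (u \<bullet> v)) =
        exp (- s * norm (u - v) ^ 2)"
      unfolding norm_diff_sq exp_add[symmetric] by (simp add: algebra_simps)
    ultimately show ?thesis
      unfolding H_def u_def[symmetric] v_def[symmetric]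
      by (simp add: power_mult_distrib field_simps)
  qed
  have intG: "integrable (M \<Otimes>\<^sub>M N) (\<lambda>p. gfeat s t m (f (fst p)) * gfeat s t m (g (snd p)))"
    and intGeq: "(\<integral>p. gfeat s t m (f (fst p)) * gfeat s t m (g (snd p)) \<partial>(M \<Otimes>\<^sub>M N)) =
        (\<integral>x. gfeat s t m (f x) \<partial>M) * (\<integral>y. gfeat s t m (g y) \<partial>N)"
    if "t \<in> T m" for t m
  proof -
    have tb: "\<And>i. i < m \<Longrightarrow> t i \<in> Basis" using that unfolding T_def by auto
    have i1: "integrable M (\<lambda>x. gfeat s t m (f x))"
      by (rule M.integrable_const_bound[where B="1 + fact m / s ^ m"])
         (use gfeat_bound[OF assms(5) tb] in auto)
    have i2: "integrable N (\<lambda>x. gfeat s t m (g x))"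
      by (rule N.integrable_const_bound[where B="1 + fact m / s ^ m"])
         (use gfeat_bound[OF assms(5) tb] in auto)
    show "integrable (M \<Otimes>\<^sub>M N) (\<lambda>p. gfeat s t m (f (fst p)) * gfeat s t m (g (snd p)))"
      by (rule integrable_pair_mult[OF assms(1,2) i1 i2])
    show "(\<integral>p. gfeat s t m (f (fst p)) * gfeat s t m (g (snd p)) \<partial>(M \<Otimes>\<^sub>M N)) =
        (\<integral>x. gfeat s t m (f x) \<partial>M) * (\<integral>y. gfeat s t m (g y) \<partial>N)"
      by (rule integral_pair_mult[OF assms(1,2) i1 i2])
  qed
  have finT: "finite (T m)" for m unfolding T_def by (simp add: finite_PiE)
  have intH: "integrable (M \<Otimes>\<^sub>M N) (H m)" for m
    by (rule P.integrable_const_bound[where B=1]) (use Hb in auto)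
  have intHeq: "integral\<^sup>L (M \<Otimes>\<^sub>M N) (H m) = (2 * s)^m / fact m * (\<Sum>t\<in>T m.
            (\<integral>x. gfeat s t m (f x) \<partial>M) * (\<integral>y. gfeat s t m (g y) \<partial>N))" for m
  proof -
    have "integral\<^sup>L (M \<Otimes>\<^sub>M N) (H m) = (\<integral>p. (2 * s)^m / fact m * (\<Sum>t\<in>T m. gfeat s t m (f (fst p)) * gfeat s t m (g (snd p))) \<partial>(M \<Otimes>\<^sub>M N))"
      by (rule Bochner_Integration.integral_cong[OF refl]) (rule Hsum)
    also have "\<dots> = (2 * s)^m / fact m * (\<Sum>t\<in>T m. (\<integral>p. gfeat s t m (f (fst p)) * gfeat s t m (g (snd p)) \<partial>(M \<Otimes>\<^sub>M N)))"
      using intG by (simp add: Bochner_Integration.integral_sum)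
    also have "\<dots> = (2 * s)^m / fact m * (\<Sum>t\<in>T m.
            (\<integral>x. gfeat s t m (f x) \<partial>M) * (\<integral>y. gfeat s t m (g y) \<partial>N))"
      using intGeq by simp
    finally show ?thesis .
  qed
  have lim: "(\<lambda>n. integral\<^sup>L (M \<Otimes>\<^sub>M N) (\<lambda>p. \<Sum>m<n. H m p)) \<longlonglongrightarrow>
      (\<integral>p. exp (- s * norm (f (fst p) - g (snd p)) ^ 2) \<partial>(M \<Otimes>\<^sub>M N))"
  proof (rule integral_dominated_convergence[where w="\<lambda>_. 1"])
    show "(\<lambda>p. exp (- s * norm (f (fst p) - g (snd p)) ^ 2)) \<in> borel_measurable (M \<Otimes>\<^sub>M N)"
      by measurable
    show "(\<lambda>p. \<Sum>m<n. H m p) \<in> borel_measurable (M \<Otimes>\<^sub>M N)" for n by measurable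
    show "integrable (M \<Otimes>\<^sub>M N) (\<lambda>_. 1::real)" by simp
    show "AE p in M \<Otimes>\<^sub>M N. (\<lambda>n. \<Sum>m<n. H m p) \<longlonglongrightarrow> exp (- s * norm (f (fst p) - g (snd p)) ^ 2)"
      using ptw by (intro AE_I2) (simp add: sums_def)
    show "AE p in M \<Otimes>\<^sub>M N. norm (\<Sum>m<n. H m p) \<le> 1" for n
    proof (intro AE_I2)
      fix p
      have "norm (\<Sum>m<n. H m p) \<le> (\<Sum>m<n. \<bar>H m p\<bar>)"
        using sum_abs[of "\<lambda>m. H m p" "{..<n}"] by simp
      then show "norm (\<Sum>m<n. H m p) \<le> 1" using bound[of p n] by linarith
    qed
  qed
  have "integral\<^sup>L (M \<Otimes>\<^sub>M N) (\<lambda>p. \<Sum>m<n. H m p) = (\<Sum>m<n. integral\<^sup>L (M \<Otimes>\<^sub>M N) (H m))" for n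
    using intH by (simp add: Bochner_Integration.integral_sum)
  with lim have "(\<lambda>m. integral\<^sup>L (M \<Otimes>\<^sub>M N) (H m)) sums
      (\<integral>p. exp (- s * norm (f (fst p) - g (snd p)) ^ 2) \<partial>(M \<Otimes>\<^sub>M N))"
    by (simp add: sums_def)
  then show ?thesis unfolding intHeq T_def .
qed

lemma gauss_psd:
  fixes f :: "'i \<Rightarrow> 'b \<Rightarrow> 'a::euclidean_space"
  assumes "finite S" "\<And>i. i \<in> S \<Longrightarrow> prob_space (M i)"
    "\<And>i. i \<in> S \<Longrightarrow> f i \<in> borel_measurable (M i)" "0 \<le> s"
  shows "0 \<le> (\<Sum>i\<in>S. \<Sum>j\<in>S. c i * c j *
            (\<integral>p. exp (- s * norm (f i (fst p) - f j (snd p)) ^ 2) \<partial>(M i \<Otimes>\<^sub>M M j)))"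
proof (cases "s = 0")
  case True
  have "(\<integral>p. exp (- s * norm (f i (fst p) - f j (snd p)) ^ 2) \<partial>(M i \<Otimes>\<^sub>M M j)) = 1"
    if "i \<in> S" "j \<in> S" for i j
  proof -
    interpret pair_prob_space "M i" "M j"
      using assms(2) that by (simp add: pair_prob_space_def pair_sigma_finite_def prob_space_imp_sigma_finite)
    show ?thesis using True by (simp add: prob_space)
  qed
  then have "(\<Sum>i\<in>S. \<Sum>j\<in>S. c i * c j *
            (\<integral>p. exp (- s * norm (f i (fst p) - f j (snd p)) ^ 2) \<partial>(M i \<Otimes>\<^sub>M M j))) =
        (\<Sum>i\<in>S. \<Sum>j\<in>S. c i * c j)" by simp
  also have "\<dots> = (\<Sum>i\<in>S. c i)^2" by (simp add: power2_eq_square sum_product)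
  finally show ?thesis by simp
next
  case False
  then have s0: "0 < s" using assms(4) by simp
  define T where "T = (\<lambda>m::nat. PiE {..<m} (\<lambda>_. (Basis::'a set)))"
  define F where "F = (\<lambda>i m t. \<integral>x. gfeat s t m (f i x) \<partial>M i)"
  define G where "G = (\<lambda>i j. \<integral>p. exp (- s * norm (f i (fst p) - f j (snd p)) ^ 2) \<partial>(M i \<Otimes>\<^sub>M M j))"
  have sij: "(\<lambda>m. (2 * s)^m / fact m * (\<Sum>t\<in>T m. F i m t * F j m t)) sums G i j"
    if "i \<in> S" "j \<in> S" for i j
    unfolding F_def G_def T_def
    by (rule gauss_pair_sums) (use assms that s0 in auto)
  have "(\<lambda>m. \<Sum>i\<in>S. \<Sum>j\<in>S. c i * c j * ((2 * s)^m / fact m * (\<Sum>t\<in>T m. F i m t * F j m t)))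
      sums (\<Sum>i\<in>S. \<Sum>j\<in>S. c i * c j * G i j)"
    by (intro sums_sum sums_mult sij)
  moreover have "(\<Sum>i\<in>S. \<Sum>j\<in>S. c i * c j * ((2 * s)^m / fact m * (\<Sum>t\<in>T m. F i m t * F j m t))) =
      (2 * s)^m / fact m * (\<Sum>t\<in>T m. (\<Sum>i\<in>S. c i * F i m t)^2)" for m
  proof -
    have "(\<Sum>i\<in>S. \<Sum>j\<in>S. c i * c j * ((2 * s)^m / fact m * (\<Sum>t\<in>T m. F i m t * F j m t))) =
        (2 * s)^m / fact m * (\<Sum>i\<in>S. \<Sum>j\<in>S. \<Sum>t\<in>T m. (c i * F i m t) * (c j * F j m t))"
      by (simp add: sum_distrib_left mult_ac)
    also have "(\<Sum>i\<in>S. \<Sum>j\<in>S. \<Sum>t\<in>T m. (c i * F i m t) * (c j * F j m t)) =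
        (\<Sum>i\<in>S. \<Sum>t\<in>T m. \<Sum>j\<in>S. (c i * F i m t) * (c j * F j m t))"
      by (intro sum.cong refl sum.swap)
    also have "\<dots> = (\<Sum>t\<in>T m. \<Sum>i\<in>S. \<Sum>j\<in>S. (c i * F i m t) * (c j * F j m t))"
      by (rule sum.swap)
    also have "\<dots> = (\<Sum>t\<in>T m. (\<Sum>i\<in>S. c i * F i m t)^2)"
      by (simp add: power2_eq_square sum_product)
    finally show ?thesis .
  qed
  ultimately have A: "(\<lambda>m. (2 * s)^m / fact m * (\<Sum>t\<in>T m. (\<Sum>i\<in>S. c i * F i m t)^2))
      sums (\<Sum>i\<in>S. \<Sum>j\<in>S. c i * c j * G i j)" by simp
  have nn: "(\<lambda>_. 0::real) m \<le> (\<lambda>m. (2 * s)^m / fact m * (\<Sum>t\<in>T m. (\<Sum>i\<in>S. c i * F i m t)^2)) m" for m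
    using s0 by (auto intro!: mult_nonneg_nonneg sum_nonneg divide_nonneg_pos)
  have "0 \<le> (\<Sum>i\<in>S. \<Sum>j\<in>S. c i * c j * G i j)"
    using sums_le[OF nn sums_zero A] by simp
  then show ?thesis unfolding G_def .
qed

lemma div_fact_le: "0 \<le> (a::real) \<Longrightarrow> a / fact j \<le> a"
  using divide_left_mono[of 1 "fact j" a] by (simp add: fact_ge_1)

definition Rk :: "nat \<Rightarrow> real \<Rightarrow> real" where
  "Rk k u = (-1) ^ (k + 1) * (exp (- u) - (\<Sum>j<k+1. (- u) ^ j / fact j))"

lemma Rk_measurable[measurable]: "Rk k \<in> borel_measurable borel"
  unfolding Rk_def by measurable

lemma Rk_taylor:
  assumes "0 \<le> u"
  shows "\<exists>t. \<bar>t\<bar> \<le> u \<and> Rk k u = exp t / fact (k + 1) * u ^ (k + 1)"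
proof -
  obtain t where t: "\<bar>t\<bar> \<le> \<bar>- u\<bar>"
    "exp (- u) = (\<Sum>m<k+1. (- u) ^ m / fact m) + exp t / fact (k+1) * (- u) ^ (k+1)"
    using Maclaurin_exp_le[of "- u" "k + 1"] by blast
  have "Rk k u = (-1) ^ (k + 1) * (exp t / fact (k+1) * (- u) ^ (k+1))"
    unfolding Rk_def using t(2) by simp
  also have "\<dots> = exp t / fact (k+1) * (((-1) ^ (k + 1) * (-1) ^ (k + 1)) * u ^ (k+1))"
    by (simp add: power_minus[of u] mult_ac)
  also have "(-1::real) ^ (k + 1) * (-1) ^ (k + 1) = 1"
    by (simp add: power_mult_distrib[symmetric])
  finally show ?thesis using t(1) assms by auto
qed

lemma Rk_nonneg: "0 \<le> u \<Longrightarrow> 0 \<le> Rk k u"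
  using Rk_taylor[of u k] by (auto intro!: mult_nonneg_nonneg divide_nonneg_pos)

lemma Rk_pos: "0 < u \<Longrightarrow> 0 < Rk k u"
  using Rk_taylor[of u k] by (auto intro!: mult_pos_pos divide_pos_pos)

lemma Rk_zero: "Rk k 0 = 0"
proof -
  have "(\<Sum>j<k+1. (- (0::real)) ^ j / fact j) = (\<Sum>j<k+1. if j = 0 then 1 else 0)"
    by (intro sum.cong refl) (simp add: power_0_left)
  also have "\<dots> = 1" by simp
  finally show ?thesis unfolding Rk_def by simp
qed

lemma Rk_small:
  assumes "0 \<le> u" "u \<le> 1"
  shows "Rk k u \<le> 3 * u ^ (k + 1)"
proof -
  obtain t where t: "\<bar>t\<bar> \<le> u" "Rk k u = exp t / fact (k + 1) * u ^ (k + 1)"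
    using Rk_taylor[OF assms(1)] by blast
  have "exp t \<le> exp 1" using t(1) assms(2) by simp
  also have "\<dots> \<le> 3" using exp_le by simp
  finally have e: "exp t \<le> 3" .
  have "exp t / fact (k + 1) \<le> exp t" by (rule div_fact_le) simp
  also have "\<dots> \<le> 3" by fact
  finally have "exp t / fact (k + 1) \<le> 3" .
  then show ?thesis unfolding t(2) using assms(1) by (intro mult_right_mono) auto
qed

lemma Rk_bound:
  assumes "0 \<le> u"
  shows "Rk k u \<le> (real k + 2) * (1 + u ^ k)"
proof -
  have pj: "u ^ j / fact j \<le> 1 + u ^ k" if "j < k + 1" for j
  proof -
    have "u ^ j / fact j \<le> u ^ j" using assms by (intro div_fact_le) simp
    also have "u ^ j \<le> 1 + u ^ k"
    proof (cases "u \<le> 1")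
      case True then have "u ^ j \<le> 1" using assms by (simp add: power_le_one)
      then show ?thesis using assms by (smt (verit) zero_le_power)
    next
      case False then have "u ^ j \<le> u ^ k" using that by (intro power_increasing) auto
      then show ?thesis by simp
    qed
    finally show ?thesis .
  qed
  have "Rk k u \<le> \<bar>Rk k u\<bar>" by simp
  also have "\<bar>Rk k u\<bar> = \<bar>exp (- u) - (\<Sum>j<k+1. (- u) ^ j / fact j)\<bar>"
    unfolding Rk_def by (simp add: abs_mult power_abs)
  also have "\<dots> \<le> exp (- u) + (\<Sum>j<k+1. \<bar>(- u) ^ j / fact j\<bar>)"
  proof -
    have "\<bar>exp (- u) - (\<Sum>j<k+1. (- u) ^ j / fact j)\<bar> \<le> \<bar>exp (- u)\<bar> + \<bar>\<Sum>j<k+1. (- u) ^ j / fact j\<bar>"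
      by (rule abs_triangle_ineq4)
    moreover have "\<bar>\<Sum>j<k+1. (- u) ^ j / fact j\<bar> \<le> (\<Sum>j<k+1. \<bar>(- u) ^ j / fact j\<bar>)"
      by (rule sum_abs)
    ultimately show ?thesis by simp
  qed
  also have "(\<Sum>j<k+1. \<bar>(- u) ^ j / fact j\<bar>) = (\<Sum>j<k+1. u ^ j / fact j)"
    using assms by (intro sum.cong refl) (simp add: power_abs)
  also have "\<dots> \<le> (\<Sum>j<k+1. 1 + u ^ k)" by (intro sum_mono pj) auto
  also have "exp (- u) \<le> 1" using assms by simp
  finally show ?thesis using zero_le_power[OF assms, of k] by (simp add: algebra_simps)
qed

definition Ikern :: "nat \<Rightarrow> real \<Rightarrow> real \<Rightarrow> real" where
  "Ikern k \<beta> u = indicator {0<..} u * Rk k u * u powr (- 1 - \<beta>)"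

lemma Ikern_measurable[measurable]: "Ikern k \<beta> \<in> borel_measurable borel"
  unfolding Ikern_def by measurable

lemma Ikern_nonneg: "0 \<le> Ikern k \<beta> u"
  unfolding Ikern_def by (auto simp: indicator_def intro!: mult_nonneg_nonneg Rk_nonneg)

definition I0 :: "nat \<Rightarrow> real \<Rightarrow> ennreal" where
  "I0 k \<beta> = (\<integral>\<^sup>+u. ennreal (Ikern k \<beta> u) \<partial>lborel)"

lemma I0_finite:
  assumes "real k < \<beta>" "\<beta> < real k + 1"
  shows "I0 k \<beta> < \<infinity>"
proof -
  define h1 where "h1 = (\<lambda>u::real. indicator {0..1} u * (3 * u powr (real k - \<beta>)))"
  define h2 where "h2 = (\<lambda>u::real. indicator {1..} u * (2 * (real k + 2) * u powr (real k - 1 - \<beta>)))"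
  have hb: "Ikern k \<beta> u \<le> h1 u + h2 u" for u
  proof (cases "0 < u")
    case False
    then have "Ikern k \<beta> u = 0" unfolding Ikern_def by simp
    moreover have "0 \<le> h1 u" "0 \<le> h2 u" unfolding h1_def h2_def by (auto simp: indicator_def)
    ultimately show ?thesis by simp
  next
    case True
    have h0: "0 \<le> h1 u" "0 \<le> h2 u" unfolding h1_def h2_def by (auto simp: indicator_def)
    show ?thesis
    proof (cases "u \<le> 1")
      case True
      have "Ikern k \<beta> u = Rk k u * u powr (- 1 - \<beta>)" unfolding Ikern_def using \<open>0 < u\<close> by simp
      also have "\<dots> \<le> 3 * u ^ (k + 1) * u powr (- 1 - \<beta>)"
        using Rk_small[of u k] True \<open>0 < u\<close> by (intro mult_right_mono) auto
      also have "\<dots> = 3 * (u powr (real k + 1) * u powr (- 1 - \<beta>))"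
        using powr_realpow[of u "k+1"] \<open>0 < u\<close> by (simp add: add.commute)
      also have "\<dots> = 3 * u powr (real k - \<beta>)"
        by (simp add: powr_add[symmetric])
      also have "\<dots> = h1 u" unfolding h1_def using True \<open>0 < u\<close> by simp
      finally show ?thesis using h0 by simp
    next
      case False
      have "Ikern k \<beta> u = Rk k u * u powr (- 1 - \<beta>)" unfolding Ikern_def using \<open>0 < u\<close> by simp
      also have "\<dots> \<le> (real k + 2) * (1 + u ^ k) * u powr (- 1 - \<beta>)"
        using Rk_bound[of u k] \<open>0 < u\<close> by (intro mult_right_mono) auto
      also have "\<dots> \<le> (real k + 2) * (2 * u ^ k) * u powr (- 1 - \<beta>)"
        using False by (intro mult_right_mono mult_left_mono) (auto simp: one_le_power)
      also have "\<dots> = 2 * (real k + 2) * (u powr (real k) * u powr (- 1 - \<beta>))"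
        using powr_realpow[of u k] \<open>0 < u\<close> by simp
      also have "\<dots> = 2 * (real k + 2) * u powr (real k - 1 - \<beta>)"
        by (simp add: powr_add[symmetric]) (simp add: algebra_simps)
      also have "\<dots> = h2 u" unfolding h2_def using False by simp
      finally show ?thesis using h0 by simp
    qed
  qed
  have i1: "((\<lambda>u. 3 * u powr (real k - \<beta>)) has_integral 3 * (1 powr (real k - \<beta> + 1) / (real k - \<beta> + 1))) {0..1}"
    by (intro has_integral_mult_right has_integral_powr_from_0) (use assms in auto)
  have i2: "((\<lambda>u. 2 * (real k + 2) * u powr (real k - 1 - \<beta>)) has_integral
      2 * (real k + 2) * (- (1 powr (real k - 1 - \<beta> + 1)) / (real k - 1 - \<beta> + 1))) {1..}"
    by (intro has_integral_mult_right has_integral_powr_to_inf) (use assms in auto)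
  have n1: "(\<integral>\<^sup>+u. ennreal (h1 u) \<partial>lborel) < \<infinity>"
    unfolding h1_def by (subst nn_integral_has_integral_lebesgue[OF _ i1]) auto
  have n2: "(\<integral>\<^sup>+u. ennreal (h2 u) \<partial>lborel) < \<infinity>"
    unfolding h2_def by (subst nn_integral_has_integral_lebesgue[OF _ i2]) auto
  have "I0 k \<beta> \<le> (\<integral>\<^sup>+u. ennreal (h1 u) + ennreal (h2 u) \<partial>lborel)"
    unfolding I0_def
  proof (rule nn_integral_mono)
    fix u
    have "0 \<le> h1 u" "0 \<le> h2 u" unfolding h1_def h2_def by (auto simp: indicator_def)
    then show "ennreal (Ikern k \<beta> u) \<le> ennreal (h1 u) + ennreal (h2 u)"
      using hb[of u] by (simp add: ennreal_plus[symmetric] del: ennreal_plus)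
  qed
  also have "\<dots> = (\<integral>\<^sup>+u. ennreal (h1 u) \<partial>lborel) + (\<integral>\<^sup>+u. ennreal (h2 u) \<partial>lborel)"
    by (rule nn_integral_add) (auto simp: h1_def h2_def)
  also have "\<dots> < \<infinity>" using n1 n2 by simp
  finally show ?thesis .
qed

lemma I0_pos:
  shows "0 < I0 k \<beta>"
proof (rule ccontr)
  assume "\<not> 0 < I0 k \<beta>"
  then have "I0 k \<beta> = 0" by (simp add: not_gr_zero)
  then have "AE u in lborel. ennreal (Ikern k \<beta> u) = 0"
    unfolding I0_def by (subst (asm) nn_integral_0_iff_AE) auto
  moreover have impl: "\<forall>u. ennreal (Ikern k \<beta> u) = 0 \<longrightarrow> u \<notin> {0<..<1::real}"
  proof (intro allI impI)
    fix u :: real assume "ennreal (Ikern k \<beta> u) = 0"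
    moreover have "0 < Ikern k \<beta> u" if "u \<in> {0<..<1}"
      using that Rk_pos[of u k] unfolding Ikern_def by (auto intro!: mult_pos_pos)
    ultimately show "u \<notin> {0<..<1}" by auto
  qed
  ultimately have "AE u in lborel. u \<notin> {0<..<1::real}"
    by (metis (mono_tags, lifting) AE_mp AE_I2)
  then have "emeasure lborel {0<..<1::real} = 0"
    by (subst (asm) AE_iff_measurable[of "{0<..<1}"]) auto
  then show False by simp
qed

lemma I0_subst:
  assumes "0 \<le> r"
  shows "(\<integral>\<^sup>+s. ennreal (indicator {0<..} s * Rk k (s * r) * s powr (- 1 - \<beta>)) \<partial>lborel)
      = ennreal (r powr \<beta>) * I0 k \<beta>"
proof (cases "r = 0")
  case True
  then show ?thesis by (simp add: Rk_zero)
next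
  case False
  then have r0: "0 < r" using assms by simp
  define L where "L = (\<integral>\<^sup>+s. ennreal (indicator {0<..} s * Rk k (s * r) * s powr (- 1 - \<beta>)) \<partial>lborel)"
  have "I0 k \<beta> = ennreal \<bar>r\<bar> * (\<integral>\<^sup>+s. ennreal (Ikern k \<beta> (0 + r * s)) \<partial>lborel)"
    unfolding I0_def by (rule nn_integral_real_affine) (use r0 in auto)
  also have "(\<lambda>s. ennreal (Ikern k \<beta> (0 + r * s))) =
      (\<lambda>s. ennreal (r powr (- 1 - \<beta>)) * ennreal (indicator {0<..} s * Rk k (s * r) * s powr (- 1 - \<beta>)))"
  proof
    fix s
    have "Ikern k \<beta> (0 + r * s) = r powr (- 1 - \<beta>) * (indicator {0<..} s * Rk k (s * r) * s powr (- 1 - \<beta>))"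
    proof (cases "0 < s")
      case True
      then show ?thesis unfolding Ikern_def using r0
        by (simp add: powr_mult mult_ac)
    next
      case False
      then have "\<not> 0 < r * s" using r0 by (simp add: zero_less_mult_iff)
      then show ?thesis using False unfolding Ikern_def by simp
    qed
    moreover have "0 \<le> indicator {0<..} s * Rk k (s * r) * s powr (- 1 - \<beta>)"
      using r0 by (auto simp: indicator_def intro!: mult_nonneg_nonneg Rk_nonneg)
    ultimately show "ennreal (Ikern k \<beta> (0 + r * s)) =
      ennreal (r powr (- 1 - \<beta>)) * ennreal (indicator {0<..} s * Rk k (s * r) * s powr (- 1 - \<beta>))"
      by (simp add: ennreal_mult)
  qed
  also have "(\<integral>\<^sup>+s. ennreal (r powr (- 1 - \<beta>)) * ennreal (indicator {0<..} s * Rk k (s * r) * s powr (- 1 - \<beta>)) \<partial>lborel)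
      = ennreal (r powr (- 1 - \<beta>)) * L"
    unfolding L_def by (rule nn_integral_cmult) measurable
  finally have "I0 k \<beta> = ennreal r * ennreal (r powr (- 1 - \<beta>)) * L"
    using r0 by (simp add: mult.assoc)
  also have "ennreal r * ennreal (r powr (- 1 - \<beta>)) = ennreal (r powr (- \<beta>))"
    using r0 by (simp add: ennreal_mult[symmetric] powr_add[symmetric] powr_mult_base)
  finally have "ennreal (r powr \<beta>) * I0 k \<beta> = ennreal (r powr \<beta>) * ennreal (r powr (- \<beta>)) * L"
    by (simp add: mult.assoc)
  also have "ennreal (r powr \<beta>) * ennreal (r powr (- \<beta>)) = 1"
    using r0 by (simp add: ennreal_mult[symmetric] powr_add[symmetric])
  finally show ?thesis unfolding L_def by simp
qed

lemma integrable_norm_pow: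
  fixes f g :: "'b \<Rightarrow> 'a::euclidean_space"
  assumes "prob_space M" "prob_space N" "f \<in> borel_measurable M" "g \<in> borel_measurable N"
    "integrable M (\<lambda>x. norm (f x) powr \<alpha>)" "integrable N (\<lambda>x. norm (g x) powr \<alpha>)" "real m \<le> \<alpha>"
  shows "integrable (M \<Otimes>\<^sub>M N) (\<lambda>p. norm (f (fst p) - g (snd p)) ^ m)"
proof (rule Bochner_Integration.integrable_bound)
  interpret M: prob_space M by fact
  interpret N: prob_space N by fact
  interpret P: pair_prob_space M N by unfold_locales
  have a0: "0 \<le> \<alpha>" using assms(7) by (meson of_nat_0_le_iff order_trans)
  show "integrable (M \<Otimes>\<^sub>M N) (\<lambda>p. 1 + norm (f (fst p) - g (snd p)) powr \<alpha>)"
    using integrable_J[OF assms(1-6) a0] by simp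
  note [measurable] = assms(3,4)
  show "(\<lambda>p. norm (f (fst p) - g (snd p)) ^ m) \<in> borel_measurable (M \<Otimes>\<^sub>M N)" by measurable
  show "AE p in M \<Otimes>\<^sub>M N. norm (norm (f (fst p) - g (snd p)) ^ m) \<le> norm (1 + norm (f (fst p) - g (snd p)) powr \<alpha>)"
    using pow_le_one_plus_powr[OF assms(7)] by (intro AE_I2) auto
qed

lemma poly_cancel:
  fixes f :: "'i \<Rightarrow> 'b \<Rightarrow> 'a::euclidean_space"
  assumes finS: "finite S"
    and P: "\<And>i. i \<in> S \<Longrightarrow> prob_space (M i)"
    and mf: "\<And>i. i \<in> S \<Longrightarrow> f i \<in> borel_measurable (M i)"
    and mom: "\<And>i. i \<in> S \<Longrightarrow> integrable (M i) (\<lambda>x. norm (f i x) powr \<alpha>)"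
    and ann: "\<And>p. mpoly_le k p \<Longrightarrow> (\<Sum>i\<in>S. c i * (\<integral>x. p (f i x) \<partial>M i)) = 0"
    and lk: "l \<le> k" and ka: "real (2 * k) \<le> \<alpha>"
  shows "(\<Sum>i\<in>S. \<Sum>j\<in>S. c i * c j * (\<integral>p. norm (f i (fst p) - f j (snd p)) ^ (2 * l) \<partial>(M i \<Otimes>\<^sub>M M j))) = 0"
proof -
  obtain T :: "(nat \<Rightarrow> 'a \<times> nat) set" and A B da db where
    T: "finite T" "\<forall>t\<in>T. mpoly_le (da t) (A t) \<and> mpoly_le (db t) (B t) \<and> da t + db t = 2 * l"
       "\<forall>u v::'a. norm (u - v) ^ (2 * l) = (\<Sum>t\<in>T. A t u * B t v)"
    using norm_pow_expand[where 'a='a and l=l] by blast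
  have intA: "integrable (M i) (\<lambda>x. A t (f i x))" if "i \<in> S" "t \<in> T" for i t
    by (rule integrable_mpoly_comp[OF P mf mom, of i "da t"]) (use that T(2) lk ka in auto)
  have intB: "integrable (M i) (\<lambda>x. B t (f i x))" if "i \<in> S" "t \<in> T" for i t
    by (rule integrable_mpoly_comp[OF P mf mom, of i "db t"]) (use that T(2) lk ka in auto)
  have pair: "(\<integral>p. norm (f i (fst p) - f j (snd p)) ^ (2 * l) \<partial>(M i \<Otimes>\<^sub>M M j)) =
      (\<Sum>t\<in>T. (\<integral>x. A t (f i x) \<partial>M i) * (\<integral>y. B t (f j y) \<partial>M j))" if "i \<in> S" "j \<in> S" for i j
  proof -
    have "(\<integral>p. norm (f i (fst p) - f j (snd p)) ^ (2 * l) \<partial>(M i \<Otimes>\<^sub>M M j)) =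
        (\<integral>p. (\<Sum>t\<in>T. A t (f i (fst p)) * B t (f j (snd p))) \<partial>(M i \<Otimes>\<^sub>M M j))"
      using T(3) by simp
    also have "\<dots> = (\<Sum>t\<in>T. (\<integral>p. A t (f i (fst p)) * B t (f j (snd p)) \<partial>(M i \<Otimes>\<^sub>M M j)))"
      by (rule Bochner_Integration.integral_sum)
         (rule integrable_pair_mult[OF P P intA intB], use that in auto)
    also have "\<dots> = (\<Sum>t\<in>T. (\<integral>x. A t (f i x) \<partial>M i) * (\<integral>y. B t (f j y) \<partial>M j))"
      by (intro sum.cong refl integral_pair_mult[OF P P intA intB]) (use that in auto)
    finally show ?thesis .
  qed
  have "(\<Sum>i\<in>S. \<Sum>j\<in>S. c i * c j * (\<integral>p. norm (f i (fst p) - f j (snd p)) ^ (2 * l) \<partial>(M i \<Otimes>\<^sub>M M j))) =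
      (\<Sum>i\<in>S. \<Sum>j\<in>S. \<Sum>t\<in>T. (c i * (\<integral>x. A t (f i x) \<partial>M i)) * (c j * (\<integral>y. B t (f j y) \<partial>M j)))"
    by (intro sum.cong refl, subst pair) (auto simp: sum_distrib_left mult_ac)
  also have "\<dots> = (\<Sum>i\<in>S. \<Sum>t\<in>T. \<Sum>j\<in>S. (c i * (\<integral>x. A t (f i x) \<partial>M i)) * (c j * (\<integral>y. B t (f j y) \<partial>M j)))"
    by (intro sum.cong refl sum.swap)
  also have "\<dots> = (\<Sum>t\<in>T. \<Sum>i\<in>S. \<Sum>j\<in>S. (c i * (\<integral>x. A t (f i x) \<partial>M i)) * (c j * (\<integral>y. B t (f j y) \<partial>M j)))"
    by (rule sum.swap)
  also have "\<dots> = (\<Sum>t\<in>T. (\<Sum>i\<in>S. c i * (\<integral>x. A t (f i x) \<partial>M i)) * (\<Sum>j\<in>S. c j * (\<integral>y. B t (f j y) \<partial>M j)))"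
    by (simp add: sum_product)
  also have "\<dots> = 0"
  proof (rule sum.neutral, rule ballI)
    fix t assume t: "t \<in> T"
    show "(\<Sum>i\<in>S. c i * (\<integral>x. A t (f i x) \<partial>M i)) * (\<Sum>j\<in>S. c j * (\<integral>y. B t (f j y) \<partial>M j)) = 0"
    proof (cases "da t \<le> k")
      case True
      then have "mpoly_le k (A t)" using T(2) t mpoly_le_mono by blast
      then show ?thesis using ann by simp
    next
      case False
      then have "db t \<le> k" using T(2) t lk by auto
      then have "mpoly_le k (B t)" using T(2) t mpoly_le_mono by blast
      then show ?thesis using ann by simp
    qed
  qed
  finally show ?thesis .
qed

lemma sq_powr_half:
  fixes x :: real
  assumes "0 \<le> x"
  shows "(x ^ 2) powr (\<alpha> / 2) = x powr \<alpha>"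
proof (cases "x = 0")
  case True then show ?thesis by simp
next
  case False
  then have "x ^ 2 = x powr 2" using assms by (simp add: powr_realpow)
  then show ?thesis by (simp only: powr_powr) simp
qed

lemma Rk_integrable:
  fixes f g :: "'b \<Rightarrow> 'a::euclidean_space"
  assumes "prob_space M" "prob_space N" "f \<in> borel_measurable M" "g \<in> borel_measurable N"
    "integrable M (\<lambda>x. norm (f x) powr \<alpha>)" "integrable N (\<lambda>x. norm (g x) powr \<alpha>)"
    "real (2 * k) \<le> \<alpha>" "0 \<le> s"
  shows "integrable (M \<Otimes>\<^sub>M N) (\<lambda>p. Rk k (s * norm (f (fst p) - g (snd p)) ^ 2))"
proof (rule Bochner_Integration.integrable_bound)
  interpret M: prob_space M by fact
  interpret N: prob_space N by fact
  interpret P: pair_prob_space M N by unfold_locales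
  note [measurable] = assms(3,4)
  show "integrable (M \<Otimes>\<^sub>M N) (\<lambda>p. (real k + 2) * (1 + s ^ k * norm (f (fst p) - g (snd p)) ^ (2 * k)))"
    using integrable_norm_pow[OF assms(1-6) assms(7)] by simp
  show "(\<lambda>p. Rk k (s * norm (f (fst p) - g (snd p)) ^ 2)) \<in> borel_measurable (M \<Otimes>\<^sub>M N)" by measurable
  show "AE p in M \<Otimes>\<^sub>M N. norm (Rk k (s * norm (f (fst p) - g (snd p)) ^ 2))
      \<le> norm ((real k + 2) * (1 + s ^ k * norm (f (fst p) - g (snd p)) ^ (2 * k)))"
  proof (intro AE_I2)
    fix p
    define r where "r = norm (f (fst p) - g (snd p))"
    have "0 \<le> s * r ^ 2" using assms(8) by simp
    then have "norm (Rk k (s * r ^ 2)) = Rk k (s * r ^ 2)" using Rk_nonneg by simp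
    also have "\<dots> \<le> (real k + 2) * (1 + (s * r ^ 2) ^ k)" by (rule Rk_bound) fact
    also have "(s * r ^ 2) ^ k = s ^ k * r ^ (2 * k)" by (simp add: power_mult_distrib power_mult)
    finally show "norm (Rk k (s * norm (f (fst p) - g (snd p)) ^ 2))
      \<le> norm ((real k + 2) * (1 + s ^ k * norm (f (fst p) - g (snd p)) ^ (2 * k)))"
      unfolding r_def using assms(8) by simp
  qed
qed

lemma pair_rep:
  fixes f g :: "'b \<Rightarrow> 'a::euclidean_space"
  assumes a0: "0 < \<alpha>" and kb: "real k < \<alpha> / 2" "\<alpha> / 2 < real k + 1"
    and PM: "prob_space M" and PN: "prob_space N"
    and mf: "f \<in> borel_measurable M" and mg: "g \<in> borel_measurable N"
    and momf: "integrable M (\<lambda>x. norm (f x) powr \<alpha>)" and momg: "integrable N (\<lambda>x. norm (g x) powr \<alpha>)"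
  defines "W \<equiv> (\<lambda>s. indicator {0<..} s * s powr (- 1 - \<alpha> / 2) *
      (\<integral>p. Rk k (s * norm (f (fst p) - g (snd p)) ^ 2) \<partial>(M \<Otimes>\<^sub>M N)))"
  shows "integrable lborel W" and "integral\<^sup>L lborel W = Jint \<alpha> M f N g * enn2real (I0 k (\<alpha> / 2))"
proof -
  interpret M: prob_space M by fact
  interpret N: prob_space N by fact
  interpret P: pair_prob_space M N by unfold_locales
  interpret Q: pair_sigma_finite "M \<Otimes>\<^sub>M N" lborel
    by (simp add: P.sigma_finite_measure_axioms lborel.sigma_finite_measure_axioms pair_sigma_finite.intro)
  interpret Q': pair_sigma_finite lborel "M \<Otimes>\<^sub>M N"
    by (simp add: P.sigma_finite_measure_axioms lborel.sigma_finite_measure_axioms pair_sigma_finite.intro)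
  note [measurable] = mf mg
  define \<beta> where "\<beta> = \<alpha> / 2"
  have k2: "real (2 * k) \<le> \<alpha>" using kb by simp
  define F where "F = (\<lambda>(p, s). ennreal (indicator {0<..} s * Rk k (s * norm (f (fst p) - g (snd p)) ^ 2) * s powr (- 1 - \<beta>)))"
  have mF: "F \<in> borel_measurable ((M \<Otimes>\<^sub>M N) \<Otimes>\<^sub>M lborel)" unfolding F_def by measurable
  have intJ: "integrable (M \<Otimes>\<^sub>M N) (\<lambda>p. norm (f (fst p) - g (snd p)) powr \<alpha>)"
    by (rule integrable_J[OF PM PN mf mg momf momg]) (use a0 in simp)
  have J0: "0 \<le> Jint \<alpha> M f N g" unfolding Jint_def by (rule integral_nonneg_AE) simp
  have "ennreal (Jint \<alpha> M f N g) = (\<integral>\<^sup>+p. ennreal (norm (f (fst p) - g (snd p)) powr \<alpha>) \<partial>(M \<Otimes>\<^sub>M N))"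
    unfolding Jint_def by (rule nn_integral_eq_integral[OF intJ, symmetric]) simp
  then have "ennreal (Jint \<alpha> M f N g) * I0 k \<beta> =
      (\<integral>\<^sup>+p. ennreal (norm (f (fst p) - g (snd p)) powr \<alpha>) * I0 k \<beta> \<partial>(M \<Otimes>\<^sub>M N))"
    by (simp add: nn_integral_multc)
  also have "\<dots> = (\<integral>\<^sup>+p. (\<integral>\<^sup>+s. F (p, s) \<partial>lborel) \<partial>(M \<Otimes>\<^sub>M N))"
  proof (rule nn_integral_cong)
    fix p
    define r where "r = norm (f (fst p) - g (snd p))"
    have "r powr \<alpha> = (r ^ 2) powr \<beta>" unfolding \<beta>_def r_def by (simp add: sq_powr_half)
    have "(\<integral>\<^sup>+s. F (p, s) \<partial>lborel) =
        (\<integral>\<^sup>+s. ennreal (indicator {0<..} s * Rk k (s * r ^ 2) * s powr (- 1 - \<beta>)) \<partial>lborel)"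
      unfolding F_def r_def by simp
    also have "\<dots> = ennreal ((r ^ 2) powr \<beta>) * I0 k \<beta>" by (rule I0_subst) simp
    finally show "ennreal (norm (f (fst p) - g (snd p)) powr \<alpha>) * I0 k \<beta> = (\<integral>\<^sup>+s. F (p, s) \<partial>lborel)"
      using \<open>r powr \<alpha> = (r ^ 2) powr \<beta>\<close> unfolding r_def by simp
  qed
  also have "\<dots> = (\<integral>\<^sup>+s. (\<integral>\<^sup>+p. F (p, s) \<partial>(M \<Otimes>\<^sub>M N)) \<partial>lborel)"
    using Q.Fubini[OF mF] by simp
  also have "\<dots> = (\<integral>\<^sup>+s. ennreal (W s) \<partial>lborel)"
  proof (rule nn_integral_cong)
    fix s :: real
    show "(\<integral>\<^sup>+p. F (p, s) \<partial>(M \<Otimes>\<^sub>M N)) = ennreal (W s)"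
    proof (cases "0 < s")
      case False
      then show ?thesis unfolding F_def W_def by simp
    next
      case True
      have intR: "integrable (M \<Otimes>\<^sub>M N) (\<lambda>p. Rk k (s * norm (f (fst p) - g (snd p)) ^ 2))"
        by (rule Rk_integrable[OF PM PN mf mg momf momg k2]) (use True in simp)
      have "(\<integral>\<^sup>+p. F (p, s) \<partial>(M \<Otimes>\<^sub>M N)) =
          (\<integral>\<^sup>+p. ennreal (s powr (- 1 - \<beta>)) * ennreal (Rk k (s * norm (f (fst p) - g (snd p)) ^ 2)) \<partial>(M \<Otimes>\<^sub>M N))"
        unfolding F_def using True
        by (intro nn_integral_cong) (simp add: ennreal_mult[symmetric] Rk_nonneg mult.commute)
      also have "\<dots> = ennreal (s powr (- 1 - \<beta>)) * (\<integral>\<^sup>+p. ennreal (Rk k (s * norm (f (fst p) - g (snd p)) ^ 2)) \<partial>(M \<Otimes>\<^sub>M N))"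
        by (rule nn_integral_cmult) measurable
      also have "(\<integral>\<^sup>+p. ennreal (Rk k (s * norm (f (fst p) - g (snd p)) ^ 2)) \<partial>(M \<Otimes>\<^sub>M N)) =
          ennreal (\<integral>p. Rk k (s * norm (f (fst p) - g (snd p)) ^ 2) \<partial>(M \<Otimes>\<^sub>M N))"
        by (rule nn_integral_eq_integral[OF intR]) (use True in \<open>simp add: Rk_nonneg\<close>)
      also have "ennreal (s powr (- 1 - \<beta>)) * \<dots> = ennreal (W s)"
        unfolding W_def \<beta>_def using True
        by (simp add: ennreal_mult[symmetric] integral_nonneg_AE Rk_nonneg)
      finally show ?thesis .
    qed
  qed
  finally have eq: "(\<integral>\<^sup>+s. ennreal (W s) \<partial>lborel) = ennreal (Jint \<alpha> M f N g) * I0 k \<beta>" ..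
  have fin: "I0 k \<beta> = ennreal (enn2real (I0 k \<beta>))"
    using I0_finite[of k \<beta>] kb unfolding \<beta>_def by simp
  have eq2: "(\<integral>\<^sup>+s. ennreal (W s) \<partial>lborel) = ennreal (Jint \<alpha> M f N g * enn2real (I0 k \<beta>))"
    using eq fin J0 by (metis ennreal_mult enn2real_nonneg)
  have mW: "W \<in> borel_measurable lborel"
  proof -
    have "(\<lambda>(s, p). Rk k (s * norm (f (fst p) - g (snd p)) ^ 2)) \<in> borel_measurable (lborel \<Otimes>\<^sub>M (M \<Otimes>\<^sub>M N))"
      by measurable
    then have "(\<lambda>s. \<integral>p. Rk k (s * norm (f (fst p) - g (snd p)) ^ 2) \<partial>(M \<Otimes>\<^sub>M N)) \<in> borel_measurable lborel"
      by (rule P.borel_measurable_lebesgue_integral)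
    then show ?thesis unfolding W_def by measurable
  qed
  have W0: "0 \<le> W s" for s
    unfolding W_def by (auto simp: indicator_def intro!: mult_nonneg_nonneg integral_nonneg_AE Rk_nonneg)
  show "integrable lborel W"
    by (rule integrableI_nn_integral_finite[OF mW _ eq2]) (simp add: W0)
  show "integral\<^sup>L lborel W = Jint \<alpha> M f N g * enn2real (I0 k (\<alpha> / 2))"
    using integral_eq_nn_integral[OF mW] eq2 W0 J0 unfolding \<beta>_def
    by (simp add: enn2real_nonneg)
qed

lemma Gp_expand:
  fixes f g :: "'b \<Rightarrow> 'a::euclidean_space"
  assumes PM: "prob_space M" and PN: "prob_space N"
    and mf: "f \<in> borel_measurable M" and mg: "g \<in> borel_measurable N"
    and momf: "integrable M (\<lambda>x. norm (f x) powr \<alpha>)" and momg: "integrable N (\<lambda>x. norm (g x) powr \<alpha>)"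
    and k2: "real (2 * k) \<le> \<alpha>" and s0: "0 \<le> s"
  shows "(\<integral>p. Rk k (s * norm (f (fst p) - g (snd p)) ^ 2) \<partial>(M \<Otimes>\<^sub>M N)) =
     (-1) ^ (k + 1) * ((\<integral>p. exp (- s * norm (f (fst p) - g (snd p)) ^ 2) \<partial>(M \<Otimes>\<^sub>M N)) -
       (\<Sum>l<k+1. (- s) ^ l / fact l * (\<integral>p. norm (f (fst p) - g (snd p)) ^ (2 * l) \<partial>(M \<Otimes>\<^sub>M N))))"
proof -
  interpret M: prob_space M by fact
  interpret N: prob_space N by fact
  interpret P: pair_prob_space M N by unfold_locales
  note [measurable] = mf mg
  have pw: "Rk k (s * r ^ 2) = (-1) ^ (k + 1) * (exp (- s * r ^ 2) - (\<Sum>l<k+1. (- s) ^ l / fact l * r ^ (2 * l)))" for r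
  proof -
    have e: "(- (s * r ^ 2)) ^ j / fact j = (- s) ^ j / fact j * r ^ (2 * j)" for j
      by (simp add: power_minus[of "s * r^2"] power_minus[of s] power_mult_distrib power_mult)
    show ?thesis unfolding Rk_def using e by simp
  qed
  have ie: "integrable (M \<Otimes>\<^sub>M N) (\<lambda>p. exp (- s * norm (f (fst p) - g (snd p)) ^ 2))"
    by (rule P.integrable_const_bound[where B=1]) (use s0 in auto)
  have ip: "integrable (M \<Otimes>\<^sub>M N) (\<lambda>p. norm (f (fst p) - g (snd p)) ^ (2 * l))" if "l < k + 1" for l
    by (rule integrable_norm_pow[OF PM PN mf mg momf momg]) (use that k2 in auto)
  have "(\<integral>p. Rk k (s * norm (f (fst p) - g (snd p)) ^ 2) \<partial>(M \<Otimes>\<^sub>M N)) =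
     (\<integral>p. (-1) ^ (k + 1) * (exp (- s * norm (f (fst p) - g (snd p)) ^ 2) -
       (\<Sum>l<k+1. (- s) ^ l / fact l * norm (f (fst p) - g (snd p)) ^ (2 * l))) \<partial>(M \<Otimes>\<^sub>M N))"
    by (simp only: pw)
  also have "\<dots> = (-1) ^ (k + 1) * (\<integral>p. (exp (- s * norm (f (fst p) - g (snd p)) ^ 2) -
       (\<Sum>l<k+1. (- s) ^ l / fact l * norm (f (fst p) - g (snd p)) ^ (2 * l))) \<partial>(M \<Otimes>\<^sub>M N))"
    by (rule integral_mult_right_zero)
  also have "(\<integral>p. (exp (- s * norm (f (fst p) - g (snd p)) ^ 2) -
       (\<Sum>l<k+1. (- s) ^ l / fact l * norm (f (fst p) - g (snd p)) ^ (2 * l))) \<partial>(M \<Otimes>\<^sub>M N)) =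
      (\<integral>p. exp (- s * norm (f (fst p) - g (snd p)) ^ 2) \<partial>(M \<Otimes>\<^sub>M N)) -
       (\<integral>p. (\<Sum>l<k+1. (- s) ^ l / fact l * norm (f (fst p) - g (snd p)) ^ (2 * l)) \<partial>(M \<Otimes>\<^sub>M N))"
  proof (rule Bochner_Integration.integral_diff[OF ie])
    show "integrable (M \<Otimes>\<^sub>M N) (\<lambda>p. \<Sum>l<k+1. (- s) ^ l / fact l * norm (f (fst p) - g (snd p)) ^ (2 * l))"
      by (intro Bochner_Integration.integrable_sum integrable_mult_right ip) auto
  qed
  also have "(\<integral>p. (\<Sum>l<k+1. (- s) ^ l / fact l * norm (f (fst p) - g (snd p)) ^ (2 * l)) \<partial>(M \<Otimes>\<^sub>M N)) =
      (\<Sum>l<k+1. (- s) ^ l / fact l * (\<integral>p. norm (f (fst p) - g (snd p)) ^ (2 * l) \<partial>(M \<Otimes>\<^sub>M N)))"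
    by (subst Bochner_Integration.integral_sum) (use ip in \<open>auto intro!: sum.cong\<close>)
  finally show ?thesis .
qed

lemma sum3_swap:
  fixes c a :: "_ \<Rightarrow> real"
  shows "(\<Sum>i\<in>S. \<Sum>j\<in>S. c i * c j * (\<Sum>l\<in>L. a l * P i j l)) = (\<Sum>l\<in>L. a l * (\<Sum>i\<in>S. \<Sum>j\<in>S. c i * c j * P i j l))"
proof -
  have "(\<Sum>i\<in>S. \<Sum>j\<in>S. c i * c j * (\<Sum>l\<in>L. a l * P i j l)) = (\<Sum>i\<in>S. \<Sum>j\<in>S. \<Sum>l\<in>L. a l * (c i * c j * P i j l))"
    by (simp add: sum_distrib_left mult_ac)
  also have "\<dots> = (\<Sum>i\<in>S. \<Sum>l\<in>L. \<Sum>j\<in>S. a l * (c i * c j * P i j l))"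
    by (intro sum.cong refl sum.swap)
  also have "\<dots> = (\<Sum>l\<in>L. \<Sum>i\<in>S. \<Sum>j\<in>S. a l * (c i * c j * P i j l))"
    by (rule sum.swap)
  also have "\<dots> = (\<Sum>l\<in>L. a l * (\<Sum>i\<in>S. \<Sum>j\<in>S. c i * c j * P i j l))"
    by (simp add: sum_distrib_left)
  finally show ?thesis .
qed

lemma sum2_lin:
  fixes c :: "_ \<Rightarrow> real"
  shows "(\<Sum>i\<in>S. \<Sum>j\<in>S. c i * c j * (x * (G i j - H i j))) =
    x * (\<Sum>i\<in>S. \<Sum>j\<in>S. c i * c j * G i j) - x * (\<Sum>i\<in>S. \<Sum>j\<in>S. c i * c j * H i j)"
proof -
  have "x * (\<Sum>i\<in>S. \<Sum>j\<in>S. c i * c j * G i j) - x * (\<Sum>i\<in>S. \<Sum>j\<in>S. c i * c j * H i j) =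
      (\<Sum>i\<in>S. \<Sum>j\<in>S. x * (c i * c j * G i j) - x * (c i * c j * H i j))"
    by (simp add: sum_distrib_left sum_subtractf)
  also have "\<dots> = (\<Sum>i\<in>S. \<Sum>j\<in>S. c i * c j * (x * (G i j - H i j)))"
    by (intro sum.cong refl) (simp add: algebra_simps)
  finally show ?thesis by simp
qed

lemma mm_aux:
  fixes m a W Gp G :: real
  assumes "m * m = 1" "W = a * Gp" "Gp = m * G"
  shows "m * W = a * G"
proof -
  have "m * W = a * ((m * m) * G)" using assms(2,3) by (simp add: mult_ac)
  then show ?thesis using assms(1) by simp
qed

lemma nonneg_of_mult_pos: "0 < (b::real) \<Longrightarrow> 0 \<le> a * b \<Longrightarrow> 0 \<le> a"
  by (simp add: zero_le_mult_iff)

lemma energy_psd: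
  fixes f :: "'i \<Rightarrow> 'b \<Rightarrow> 'a::euclidean_space" and c :: "'i \<Rightarrow> real"
  assumes apos: "0 < \<alpha>" and finS: "finite S"
    and P: "\<And>i. i \<in> S \<Longrightarrow> prob_space (M i)"
    and mf: "\<And>i. i \<in> S \<Longrightarrow> f i \<in> borel_measurable (M i)"
    and mom: "\<And>i. i \<in> S \<Longrightarrow> integrable (M i) (\<lambda>x. norm (f i x) powr \<alpha>)"
    and ann: "\<And>p. mpoly_le (nat \<lfloor>\<alpha> / 2\<rfloor>) p \<Longrightarrow> (\<Sum>i\<in>S. c i * (\<integral>x. p (f i x) \<partial>M i)) = 0"
  shows "0 \<le> (-1) ^ (nat \<lfloor>\<alpha> / 2\<rfloor> + 1) * (\<Sum>i\<in>S. \<Sum>j\<in>S. c i * c j * Jint \<alpha> (M i) (f i) (M j) (f j))"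
proof -
  define k where "k = nat \<lfloor>\<alpha> / 2\<rfloor>"
  have fl0: "0 \<le> \<lfloor>\<alpha> / 2\<rfloor>" using apos by simp
  have fle: "real_of_int \<lfloor>\<alpha> / 2\<rfloor> \<le> \<alpha> / 2" by (rule of_int_floor_le)
  have "real k = real_of_int \<lfloor>\<alpha> / 2\<rfloor>" unfolding k_def using fl0 by simp
  then have kle: "real k \<le> \<alpha> / 2" using fle by linarith
  have klt: "\<alpha> / 2 < real k + 1" unfolding k_def using fl0 by (simp add: of_nat_nat)
  have k2: "real (2 * k) \<le> \<alpha>" using kle by simp
  have ann': "\<And>p. mpoly_le k p \<Longrightarrow> (\<Sum>i\<in>S. c i * (\<integral>x. p (f i x) \<partial>M i)) = 0"
    using ann unfolding k_def .
  note pc = poly_cancel[OF finS P mf mom ann' _ k2]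
  show ?thesis
  proof (cases "\<alpha> = 2 * real k")
    case True
    then have k1: "1 \<le> k" using apos by (cases k) auto
    have "Jint \<alpha> (M i) (f i) (M j) (f j) = (\<integral>p. norm (f i (fst p) - f j (snd p)) ^ (2 * k) \<partial>(M i \<Otimes>\<^sub>M M j))"
      for i j
      unfolding Jint_def
    proof (rule Bochner_Integration.integral_cong[OF refl])
      fix p
      show "norm (f i (fst p) - f j (snd p)) powr \<alpha> = norm (f i (fst p) - f j (snd p)) ^ (2 * k)"
      proof (cases "f i (fst p) - f j (snd p) = 0")
        case True then show ?thesis using k1 by simp
      next
        case False
        then show ?thesis using True powr_realpow[of "norm (f i (fst p) - f j (snd p))" "2 * k"]
          by simp
      qed
    qed
    then have "(\<Sum>i\<in>S. \<Sum>j\<in>S. c i * c j * Jint \<alpha> (M i) (f i) (M j) (f j)) = 0"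
      using pc[of k] by simp
    then show ?thesis unfolding k_def by simp
  next
    case False
    then have kb: "real k < \<alpha> / 2" using kle by simp
    define I0r where "I0r = enn2real (I0 k (\<alpha> / 2))"
    have I0r_pos: "0 < I0r"
      unfolding I0r_def using I0_pos[of k "\<alpha> / 2"] I0_finite[of k "\<alpha> / 2"] kb klt
      by (simp add: enn2real_positive_iff)
    define Gp where "Gp = (\<lambda>i j s. \<integral>p. Rk k (s * norm (f i (fst p) - f j (snd p)) ^ 2) \<partial>(M i \<Otimes>\<^sub>M M j))"
    define W where "W = (\<lambda>i j s. indicator {0<..} s * s powr (- 1 - \<alpha> / 2) * Gp i j s)"
    have Wint: "integrable lborel (W i j)" and Weq: "integral\<^sup>L lborel (W i j) = Jint \<alpha> (M i) (f i) (M j) (f j) * I0r"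
      if "i \<in> S" "j \<in> S" for i j
      using pair_rep[OF apos kb klt P[OF that(1)] P[OF that(2)] mf[OF that(1)] mf[OF that(2)]
          mom[OF that(1)] mom[OF that(2)]] unfolding W_def Gp_def I0r_def by auto
    have "(\<Sum>i\<in>S. \<Sum>j\<in>S. c i * c j * Jint \<alpha> (M i) (f i) (M j) (f j)) * I0r =
        (\<Sum>i\<in>S. \<Sum>j\<in>S. c i * c j * integral\<^sup>L lborel (W i j))"
      by (simp add: Weq sum_distrib_right sum_distrib_left mult_ac)
    also have "\<dots> = (\<integral>s. (\<Sum>i\<in>S. \<Sum>j\<in>S. c i * c j * W i j s) \<partial>lborel)"
      using Wint by (simp add: Bochner_Integration.integral_sum)
    finally have eq: "(\<Sum>i\<in>S. \<Sum>j\<in>S. c i * c j * Jint \<alpha> (M i) (f i) (M j) (f j)) * I0r =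
        (\<integral>s. (\<Sum>i\<in>S. \<Sum>j\<in>S. c i * c j * W i j s) \<partial>lborel)" .
    have pos: "0 \<le> (-1) ^ (k + 1) * (\<Sum>i\<in>S. \<Sum>j\<in>S. c i * c j * W i j s)" for s
    proof (cases "0 < s")
      case False
      then show ?thesis unfolding W_def by simp
    next
      case True
      define Gs where "Gs = (\<lambda>i j. \<integral>p. exp (- s * norm (f i (fst p) - f j (snd p)) ^ 2) \<partial>(M i \<Otimes>\<^sub>M M j))"
      define Pl where "Pl = (\<lambda>i j l. \<integral>p. norm (f i (fst p) - f j (snd p)) ^ (2 * l) \<partial>(M i \<Otimes>\<^sub>M M j))"
      have Gpe: "Gp i j s = (-1) ^ (k + 1) * (Gs i j - (\<Sum>l<k+1. (- s) ^ l / fact l * Pl i j l))"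
        if "i \<in> S" "j \<in> S" for i j
        unfolding Gp_def Gs_def Pl_def
        by (rule Gp_expand[OF P[OF that(1)] P[OF that(2)] mf[OF that(1)] mf[OF that(2)]
          mom[OF that(1)] mom[OF that(2)] k2]) (use True in simp)
      have "(\<Sum>i\<in>S. \<Sum>j\<in>S. c i * c j * Gp i j s) =
          (\<Sum>i\<in>S. \<Sum>j\<in>S. c i * c j * ((-1) ^ (k + 1) * (Gs i j - (\<Sum>l<k+1. (- s) ^ l / fact l * Pl i j l))))"
        by (intro sum.cong refl) (simp add: Gpe)
      also have "\<dots> = (-1) ^ (k + 1) * (\<Sum>i\<in>S. \<Sum>j\<in>S. c i * c j * Gs i j) -
          (-1) ^ (k + 1) * (\<Sum>i\<in>S. \<Sum>j\<in>S. c i * c j * (\<Sum>l<k+1. (- s) ^ l / fact l * Pl i j l))"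
        by (rule sum2_lin)
      also have "(\<Sum>i\<in>S. \<Sum>j\<in>S. c i * c j * (\<Sum>l<k+1. (- s) ^ l / fact l * Pl i j l)) =
          (\<Sum>l<k+1. (- s) ^ l / fact l * (\<Sum>i\<in>S. \<Sum>j\<in>S. c i * c j * Pl i j l))"
        by (rule sum3_swap)
      also have "\<dots> = 0"
        by (intro sum.neutral ballI) (simp add: Pl_def pc)
      finally have Gp_eq: "(\<Sum>i\<in>S. \<Sum>j\<in>S. c i * c j * Gp i j s) = (-1) ^ (k + 1) * (\<Sum>i\<in>S. \<Sum>j\<in>S. c i * c j * Gs i j)"
        by simp
      have W_eq: "(\<Sum>i\<in>S. \<Sum>j\<in>S. c i * c j * W i j s) =
          s powr (- 1 - \<alpha> / 2) * (\<Sum>i\<in>S. \<Sum>j\<in>S. c i * c j * Gp i j s)"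
        unfolding W_def using True by (simp add: sum_distrib_left mult_ac)
      have G0: "0 \<le> (\<Sum>i\<in>S. \<Sum>j\<in>S. c i * c j * Gs i j)"
        unfolding Gs_def by (rule gauss_psd[OF finS P mf]) (use True in auto)
      have mm: "(-1::real) ^ (k + 1) * (-1) ^ (k + 1) = 1"
        by (simp add: power_mult_distrib[symmetric])
      have "(-1) ^ (k + 1) * (\<Sum>i\<in>S. \<Sum>j\<in>S. c i * c j * W i j s) =
          s powr (- 1 - \<alpha> / 2) * (\<Sum>i\<in>S. \<Sum>j\<in>S. c i * c j * Gs i j)"
        by (rule mm_aux[OF mm W_eq Gp_eq])
      then show ?thesis using G0 by simp
    qed
    have "0 \<le> (\<integral>s. (-1) ^ (k + 1) * (\<Sum>i\<in>S. \<Sum>j\<in>S. c i * c j * W i j s) \<partial>lborel)"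
      by (rule integral_nonneg_AE) (use pos in simp)
    also have "\<dots> = (-1) ^ (k + 1) * ((\<Sum>i\<in>S. \<Sum>j\<in>S. c i * c j * Jint \<alpha> (M i) (f i) (M j) (f j)) * I0r)"
      using eq by simp
    finally have "0 \<le> ((-1) ^ (k + 1) * (\<Sum>i\<in>S. \<Sum>j\<in>S. c i * c j * Jint \<alpha> (M i) (f i) (M j) (f j))) * I0r"
      by (simp add: mult_ac)
    then show ?thesis unfolding k_def[symmetric] by (rule nonneg_of_mult_pos[OF I0r_pos])
  qed
qed

lemma moment_from_pair:
  fixes \<mu> :: "'a::euclidean_space measure"
  assumes P: "prob_space \<mu>" and S: "sets \<mu> = sets borel" and a0: "0 \<le> \<alpha>"
    and I: "integrable (\<mu> \<Otimes>\<^sub>M \<mu>) (energy_kernel \<alpha>)"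
  shows "integrable \<mu> (\<lambda>x. norm x powr \<alpha>)"
proof -
  interpret prob_space \<mu> by fact
  interpret pair_prob_space \<mu> \<mu> by unfold_locales
  have mx[measurable]: "(\<lambda>x. x) \<in> borel_measurable \<mu>" using S by (rule measurable_ident_sets)
  have ae: "AE x in \<mu>. integrable \<mu> (\<lambda>y. energy_kernel \<alpha> (x, y))"
    by (rule AE_integrable_fst'[OF I])
  have "AE x in \<mu>. x \<in> space \<mu> \<and> integrable \<mu> (\<lambda>y. energy_kernel \<alpha> (x, y))"
    using AE_space ae by eventually_elim auto
  have "\<exists>x. x \<in> space \<mu> \<and> integrable \<mu> (\<lambda>y. energy_kernel \<alpha> (x, y))"
  proof (rule ccontr)
    assume "\<not> ?thesis"
    with \<open>AE x in \<mu>. x \<in> space \<mu> \<and> integrable \<mu> (\<lambda>y. energy_kernel \<alpha> (x, y))\<close>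
    have "AE x in \<mu>. False" by (auto elim: eventually_mono)
    then show False by simp
  qed
  then obtain x0 where x0: "integrable \<mu> (\<lambda>y. norm (x0 - y) powr \<alpha>)"
    unfolding energy_kernel_def by auto
  show ?thesis
  proof (rule Bochner_Integration.integrable_bound)
    show "integrable \<mu> (\<lambda>y. 2 powr \<alpha> * (norm x0 powr \<alpha> + norm (x0 - y) powr \<alpha>))"
      using x0 by simp
    show "(\<lambda>x. norm x powr \<alpha>) \<in> borel_measurable \<mu>" by measurable
    show "AE y in \<mu>. norm (norm y powr \<alpha>) \<le> norm (2 powr \<alpha> * (norm x0 powr \<alpha> + norm (x0 - y) powr \<alpha>))"
    proof (intro AE_I2)
      fix y :: 'a
      have "norm (x0 - (x0 - y)) powr \<alpha> \<le> 2 powr \<alpha> * (norm x0 powr \<alpha> + norm (x0 - y) powr \<alpha>)"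
        by (rule norm_diff_powr_bound[OF a0])
      then show "norm (norm y powr \<alpha>) \<le> norm (2 powr \<alpha> * (norm x0 powr \<alpha> + norm (x0 - y) powr \<alpha>))"
        by simp
    qed
  qed
qed

lemma Jint_distr:
  fixes f g :: "'c \<Rightarrow> 'a::euclidean_space"
  assumes "prob_space M" "prob_space N" "\<phi> \<in> M \<rightarrow>\<^sub>M X" "\<psi> \<in> N \<rightarrow>\<^sub>M Y"
    "f \<in> borel_measurable X" "g \<in> borel_measurable Y"
  shows "Jint \<alpha> (distr M X \<phi>) f (distr N Y \<psi>) g = Jint \<alpha> M (\<lambda>x. f (\<phi> x)) N (\<lambda>y. g (\<psi> y))"
proof -
  interpret M: prob_space M by fact
  interpret N: prob_space N by fact
  note [measurable] = assms(3-6)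
  have "prob_space (distr N Y \<psi>)" using assms(4) by (simp add: N.prob_space_distr)
  then have sf: "sigma_finite_measure (distr N Y \<psi>)" by (simp add: prob_space_imp_sigma_finite)
  have "distr M X \<phi> \<Otimes>\<^sub>M distr N Y \<psi> = distr (M \<Otimes>\<^sub>M N) (X \<Otimes>\<^sub>M Y) (\<lambda>(x, y). (\<phi> x, \<psi> y))"
    by (rule pair_measure_distr[OF assms(3,4) sf])
  then have "Jint \<alpha> (distr M X \<phi>) f (distr N Y \<psi>) g =
      (\<integral>p. norm (f (fst p) - g (snd p)) powr \<alpha> \<partial>distr (M \<Otimes>\<^sub>M N) (X \<Otimes>\<^sub>M Y) (\<lambda>(x, y). (\<phi> x, \<psi> y)))"
    unfolding Jint_def by simp
  also have "\<dots> = (\<integral>p. (\<lambda>p. norm (f (fst p) - g (snd p)) powr \<alpha>) ((\<lambda>(x, y). (\<phi> x, \<psi> y)) p) \<partial>(M \<Otimes>\<^sub>M N))"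
    by (rule integral_distr) measurable
  also have "\<dots> = Jint \<alpha> M (\<lambda>x. f (\<phi> x)) N (\<lambda>y. g (\<psi> y))"
    unfolding Jint_def by (simp add: case_prod_beta')
  finally show ?thesis .
qed

lemma moment_affine:
  fixes f :: "'b \<Rightarrow> 'a::euclidean_space"
  assumes "prob_space M" "f \<in> borel_measurable M" "integrable M (\<lambda>x. norm (f x) powr \<alpha>)" "0 \<le> \<alpha>"
  shows "integrable M (\<lambda>x. norm (a *\<^sub>R f x + q) powr \<alpha>)"
proof (rule Bochner_Integration.integrable_bound)
  interpret prob_space M by fact
  note [measurable] = assms(2)
  show "integrable M (\<lambda>x. 2 powr \<alpha> * (\<bar>a\<bar> powr \<alpha> * norm (f x) powr \<alpha> + norm q powr \<alpha>))"
    using assms(3) by simp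
  show "(\<lambda>x. norm (a *\<^sub>R f x + q) powr \<alpha>) \<in> borel_measurable M" by measurable
  show "AE x in M. norm (norm (a *\<^sub>R f x + q) powr \<alpha>) \<le> norm (2 powr \<alpha> * (\<bar>a\<bar> powr \<alpha> * norm (f x) powr \<alpha> + norm q powr \<alpha>))"
  proof (intro AE_I2)
    fix x
    have "norm (a *\<^sub>R f x - (- q)) powr \<alpha> \<le> 2 powr \<alpha> * (norm (a *\<^sub>R f x) powr \<alpha> + norm (- q) powr \<alpha>)"
      by (rule norm_diff_powr_bound[OF assms(4)])
    then show "norm (norm (a *\<^sub>R f x + q) powr \<alpha>) \<le> norm (2 powr \<alpha> * (\<bar>a\<bar> powr \<alpha> * norm (f x) powr \<alpha> + norm q powr \<alpha>))"
      by (simp add: powr_mult)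
  qed
qed

lemma moment_pair_affine:
  fixes f g :: "'b \<Rightarrow> 'a::euclidean_space"
  assumes "prob_space M" "prob_space N" "f \<in> borel_measurable M" "g \<in> borel_measurable N"
    "integrable M (\<lambda>x. norm (f x) powr \<alpha>)" "integrable N (\<lambda>x. norm (g x) powr \<alpha>)" "0 \<le> \<alpha>"
  shows "integrable (M \<Otimes>\<^sub>M N) (\<lambda>p. norm (a *\<^sub>R f (fst p) + b *\<^sub>R g (snd p)) powr \<alpha>)"
proof (rule Bochner_Integration.integrable_bound)
  interpret M: prob_space M by fact
  interpret N: prob_space N by fact
  interpret P: pair_prob_space M N by unfold_locales
  note [measurable] = assms(3,4)
  have i1: "integrable (M \<Otimes>\<^sub>M N) (\<lambda>p. norm (f (fst p)) powr \<alpha> * 1)"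
    by (rule integrable_pair_mult) (use assms in auto)
  have i2: "integrable (M \<Otimes>\<^sub>M N) (\<lambda>p. 1 * norm (g (snd p)) powr \<alpha>)"
    by (rule integrable_pair_mult) (use assms in auto)
  show "integrable (M \<Otimes>\<^sub>M N) (\<lambda>p. 2 powr \<alpha> * (\<bar>a\<bar> powr \<alpha> * norm (f (fst p)) powr \<alpha> + \<bar>b\<bar> powr \<alpha> * norm (g (snd p)) powr \<alpha>))"
    using i1 i2 by simp
  show "(\<lambda>p. norm (a *\<^sub>R f (fst p) + b *\<^sub>R g (snd p)) powr \<alpha>) \<in> borel_measurable (M \<Otimes>\<^sub>M N)" by measurable
  show "AE p in M \<Otimes>\<^sub>M N. norm (norm (a *\<^sub>R f (fst p) + b *\<^sub>R g (snd p)) powr \<alpha>)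
      \<le> norm (2 powr \<alpha> * (\<bar>a\<bar> powr \<alpha> * norm (f (fst p)) powr \<alpha> + \<bar>b\<bar> powr \<alpha> * norm (g (snd p)) powr \<alpha>))"
  proof (intro AE_I2)
    fix p
    have "norm (a *\<^sub>R f (fst p) - (- (b *\<^sub>R g (snd p)))) powr \<alpha> \<le>
        2 powr \<alpha> * (norm (a *\<^sub>R f (fst p)) powr \<alpha> + norm (- (b *\<^sub>R g (snd p))) powr \<alpha>)"
      by (rule norm_diff_powr_bound[OF assms(7)])
    then show "norm (norm (a *\<^sub>R f (fst p) + b *\<^sub>R g (snd p)) powr \<alpha>)
      \<le> norm (2 powr \<alpha> * (\<bar>a\<bar> powr \<alpha> * norm (f (fst p)) powr \<alpha> + \<bar>b\<bar> powr \<alpha> * norm (g (snd p)) powr \<alpha>))"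
      by (simp add: powr_mult)
  qed
qed

lemma conv_mom1:
  fixes \<mu> \<nu> \<rho> :: "'a::euclidean_space measure"
  assumes P: "prob_space \<mu>" "prob_space \<nu>" "prob_space \<rho>"
    and S: "sets \<mu> = sets borel" "sets \<nu> = sets borel" "sets \<rho> = sets borel"
    and mom: "integrable \<mu> (\<lambda>x. norm x powr \<alpha>)" "integrable \<nu> (\<lambda>x. norm x powr \<alpha>)" "integrable \<rho> (\<lambda>x. norm x powr \<alpha>)"
    and em: "equal_moments_upto l \<mu> \<nu>" and kl: "k \<le> l" and ka: "real k \<le> \<alpha>" and p: "mpoly_le k p"
  shows "(\<integral>z. p (a *\<^sub>R fst z + b *\<^sub>R snd z) \<partial>(\<mu> \<Otimes>\<^sub>M \<rho>)) = (\<integral>z. p (a *\<^sub>R fst z + b *\<^sub>R snd z) \<partial>(\<nu> \<Otimes>\<^sub>M \<rho>))"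
proof -
  interpret M: prob_space \<mu> by fact
  interpret N: prob_space \<nu> by fact
  interpret R: prob_space \<rho> by fact
  interpret P1: pair_prob_space \<mu> \<rho> by unfold_locales
  interpret P2: pair_prob_space \<nu> \<rho> by unfold_locales
  have a0: "0 \<le> \<alpha>" using ka by (meson of_nat_0_le_iff order_trans)
  have i1: "(\<lambda>x. x) \<in> borel_measurable \<mu>" "(\<lambda>x. x) \<in> borel_measurable \<nu>" "(\<lambda>x. x) \<in> borel_measurable \<rho>"
    using S by (auto intro: measurable_ident_sets)
  have int1: "integrable (\<mu> \<Otimes>\<^sub>M \<rho>) (\<lambda>z. p (a *\<^sub>R fst z + b *\<^sub>R snd z))"
  proof (rule integrable_mpoly_comp[OF _ _ _ ka p])
    show "prob_space (\<mu> \<Otimes>\<^sub>M \<rho>)" by (rule P1.prob_space_axioms)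
    show "(\<lambda>z. a *\<^sub>R fst z + b *\<^sub>R snd z) \<in> borel_measurable (\<mu> \<Otimes>\<^sub>M \<rho>)"
      using i1 by measurable
    show "integrable (\<mu> \<Otimes>\<^sub>M \<rho>) (\<lambda>z. norm (a *\<^sub>R fst z + b *\<^sub>R snd z) powr \<alpha>)"
      using moment_pair_affine[OF P(1,3) i1(1,3) mom(1,3) a0, of a b] by simp
  qed
  have int2: "integrable (\<nu> \<Otimes>\<^sub>M \<rho>) (\<lambda>z. p (a *\<^sub>R fst z + b *\<^sub>R snd z))"
  proof (rule integrable_mpoly_comp[OF _ _ _ ka p])
    show "prob_space (\<nu> \<Otimes>\<^sub>M \<rho>)" by (rule P2.prob_space_axioms)
    show "(\<lambda>z. a *\<^sub>R fst z + b *\<^sub>R snd z) \<in> borel_measurable (\<nu> \<Otimes>\<^sub>M \<rho>)"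
      using i1 by measurable
    show "integrable (\<nu> \<Otimes>\<^sub>M \<rho>) (\<lambda>z. norm (a *\<^sub>R fst z + b *\<^sub>R snd z) powr \<alpha>)"
      using moment_pair_affine[OF P(2,3) i1(2,3) mom(2,3) a0, of a b] by simp
  qed
  have "(\<integral>z. p (a *\<^sub>R fst z + b *\<^sub>R snd z) \<partial>(\<mu> \<Otimes>\<^sub>M \<rho>)) = (\<integral>y. (\<integral>x. p (a *\<^sub>R x + b *\<^sub>R y) \<partial>\<mu>) \<partial>\<rho>)"
    using P1.integral_snd[of "\<lambda>x y. p (a *\<^sub>R x + b *\<^sub>R y)"] int1 by (simp add: case_prod_beta')
  also have "\<dots> = (\<integral>y. (\<integral>x. p (a *\<^sub>R x + b *\<^sub>R y) \<partial>\<nu>) \<partial>\<rho>)"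
    by (intro Bochner_Integration.integral_cong refl equal_moments_mpoly[OF em kl] mpoly_le_affine p)
  also have "\<dots> = (\<integral>z. p (a *\<^sub>R fst z + b *\<^sub>R snd z) \<partial>(\<nu> \<Otimes>\<^sub>M \<rho>))"
    using P2.integral_snd[of "\<lambda>x y. p (a *\<^sub>R x + b *\<^sub>R y)"] int2 by (simp add: case_prod_beta')
  finally show ?thesis .
qed

lemma conv_mom2:
  fixes \<mu> \<nu> \<rho> :: "'a::euclidean_space measure"
  assumes P: "prob_space \<mu>" "prob_space \<nu>" "prob_space \<rho>"
    and S: "sets \<mu> = sets borel" "sets \<nu> = sets borel" "sets \<rho> = sets borel"
    and mom: "integrable \<mu> (\<lambda>x. norm x powr \<alpha>)" "integrable \<nu> (\<lambda>x. norm x powr \<alpha>)" "integrable \<rho> (\<lambda>x. norm x powr \<alpha>)"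
    and em: "equal_moments_upto l \<mu> \<nu>" and kl: "k \<le> l" and ka: "real k \<le> \<alpha>" and p: "mpoly_le k p"
  shows "(\<integral>z. p (a *\<^sub>R fst z + b *\<^sub>R snd z) \<partial>(\<rho> \<Otimes>\<^sub>M \<mu>)) = (\<integral>z. p (a *\<^sub>R fst z + b *\<^sub>R snd z) \<partial>(\<rho> \<Otimes>\<^sub>M \<nu>))"
proof -
  interpret M: prob_space \<mu> by fact
  interpret N: prob_space \<nu> by fact
  interpret R: prob_space \<rho> by fact
  interpret P1: pair_prob_space \<rho> \<mu> by unfold_locales
  interpret P2: pair_prob_space \<rho> \<nu> by unfold_locales
  have a0: "0 \<le> \<alpha>" using ka by (meson of_nat_0_le_iff order_trans)
  have i1: "(\<lambda>x. x) \<in> borel_measurable \<mu>" "(\<lambda>x. x) \<in> borel_measurable \<nu>" "(\<lambda>x. x) \<in> borel_measurable \<rho>"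
    using S by (auto intro: measurable_ident_sets)
  have int1: "integrable (\<rho> \<Otimes>\<^sub>M \<mu>) (\<lambda>z. p (a *\<^sub>R fst z + b *\<^sub>R snd z))"
  proof (rule integrable_mpoly_comp[OF _ _ _ ka p])
    show "prob_space (\<rho> \<Otimes>\<^sub>M \<mu>)" by (rule P1.prob_space_axioms)
    show "(\<lambda>z. a *\<^sub>R fst z + b *\<^sub>R snd z) \<in> borel_measurable (\<rho> \<Otimes>\<^sub>M \<mu>)"
      using i1 by measurable
    show "integrable (\<rho> \<Otimes>\<^sub>M \<mu>) (\<lambda>z. norm (a *\<^sub>R fst z + b *\<^sub>R snd z) powr \<alpha>)"
      using moment_pair_affine[OF P(3,1) i1(3,1) mom(3,1) a0, of a b] by simp
  qed
  have int2: "integrable (\<rho> \<Otimes>\<^sub>M \<nu>) (\<lambda>z. p (a *\<^sub>R fst z + b *\<^sub>R snd z))"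
  proof (rule integrable_mpoly_comp[OF _ _ _ ka p])
    show "prob_space (\<rho> \<Otimes>\<^sub>M \<nu>)" by (rule P2.prob_space_axioms)
    show "(\<lambda>z. a *\<^sub>R fst z + b *\<^sub>R snd z) \<in> borel_measurable (\<rho> \<Otimes>\<^sub>M \<nu>)"
      using i1 by measurable
    show "integrable (\<rho> \<Otimes>\<^sub>M \<nu>) (\<lambda>z. norm (a *\<^sub>R fst z + b *\<^sub>R snd z) powr \<alpha>)"
      using moment_pair_affine[OF P(3,2) i1(3,2) mom(3,2) a0, of a b] by simp
  qed
  have "(\<integral>z. p (a *\<^sub>R fst z + b *\<^sub>R snd z) \<partial>(\<rho> \<Otimes>\<^sub>M \<mu>)) = (\<integral>x. (\<integral>y. p (a *\<^sub>R x + b *\<^sub>R y) \<partial>\<mu>) \<partial>\<rho>)"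
    using P1.integral_fst[of "\<lambda>x y. p (a *\<^sub>R x + b *\<^sub>R y)"] int1 by (simp add: case_prod_beta')
  also have "\<dots> = (\<integral>x. (\<integral>y. p (a *\<^sub>R x + b *\<^sub>R y) \<partial>\<nu>) \<partial>\<rho>)"
  proof (rule Bochner_Integration.integral_cong[OF refl])
    fix x
    have "mpoly_le k (\<lambda>y. p (b *\<^sub>R y + a *\<^sub>R x))" by (rule mpoly_le_affine[OF p])
    then have "(\<integral>y. p (b *\<^sub>R y + a *\<^sub>R x) \<partial>\<mu>) = (\<integral>y. p (b *\<^sub>R y + a *\<^sub>R x) \<partial>\<nu>)"
      by (rule equal_moments_mpoly[OF em kl])
    then show "(\<integral>y. p (a *\<^sub>R x + b *\<^sub>R y) \<partial>\<mu>) = (\<integral>y. p (a *\<^sub>R x + b *\<^sub>R y) \<partial>\<nu>)"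
      by (simp add: add.commute)
  qed
  also have "\<dots> = (\<integral>z. p (a *\<^sub>R fst z + b *\<^sub>R snd z) \<partial>(\<rho> \<Otimes>\<^sub>M \<nu>))"
    using P2.integral_fst[of "\<lambda>x y. p (a *\<^sub>R x + b *\<^sub>R y)"] int2 by (simp add: case_prod_beta')
  finally show ?thesis .
qed

lemma J_rearr:
  fixes \<mu> \<nu> \<rho> :: "'a::euclidean_space measure"
  assumes P: "prob_space \<mu>" "prob_space \<nu>" "prob_space \<rho>"
    and S[measurable_cong]: "sets \<mu> = sets borel" "sets \<nu> = sets borel" "sets \<rho> = sets borel"
    and mom: "integrable \<mu> (\<lambda>x. norm x powr \<alpha>)" "integrable \<nu> (\<lambda>x. norm x powr \<alpha>)" "integrable \<rho> (\<lambda>x. norm x powr \<alpha>)"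
    and a0: "0 \<le> \<alpha>"
  shows "integrable (\<rho> \<Otimes>\<^sub>M \<rho>) (\<lambda>w. Jint \<alpha> \<mu> (\<lambda>x. a *\<^sub>R x + b *\<^sub>R fst w) \<nu> (\<lambda>y. a *\<^sub>R y + b *\<^sub>R snd w))"
    and "Jint \<alpha> (\<mu> \<Otimes>\<^sub>M \<rho>) (\<lambda>z. a *\<^sub>R fst z + b *\<^sub>R snd z) (\<nu> \<Otimes>\<^sub>M \<rho>) (\<lambda>z. a *\<^sub>R fst z + b *\<^sub>R snd z)
       = (\<integral>w. Jint \<alpha> \<mu> (\<lambda>x. a *\<^sub>R x + b *\<^sub>R fst w) \<nu> (\<lambda>y. a *\<^sub>R y + b *\<^sub>R snd w) \<partial>(\<rho> \<Otimes>\<^sub>M \<rho>))"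
proof -
  interpret M: prob_space \<mu> by fact
  interpret N: prob_space \<nu> by fact
  interpret R: prob_space \<rho> by fact
  interpret MR: pair_prob_space \<mu> \<rho> by unfold_locales
  interpret NR: pair_prob_space \<nu> \<rho> by unfold_locales
  interpret MN: pair_prob_space \<mu> \<nu> by unfold_locales
  interpret RR: pair_prob_space \<rho> \<rho> by unfold_locales
  interpret Q: pair_prob_space "\<mu> \<Otimes>\<^sub>M \<rho>" "\<nu> \<Otimes>\<^sub>M \<rho>" by unfold_locales
  interpret Q2: pair_prob_space "\<rho> \<Otimes>\<^sub>M \<rho>" "\<mu> \<Otimes>\<^sub>M \<nu>" by unfold_locales
  define g :: "'a \<Rightarrow> 'a \<Rightarrow> 'a \<Rightarrow> 'a \<Rightarrow> ennreal" where "g = (\<lambda>x q y q'. ennreal (norm (a *\<^sub>R x + b *\<^sub>R q - (a *\<^sub>R y + b *\<^sub>R q')) powr \<alpha>))"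
  have id: "(\<lambda>x. x) \<in> borel_measurable \<mu>" "(\<lambda>x. x) \<in> borel_measurable \<nu>" "(\<lambda>x. x) \<in> borel_measurable \<rho>"
    using S by (auto intro: measurable_ident_sets)
  define LHS where "LHS = Jint \<alpha> (\<mu> \<Otimes>\<^sub>M \<rho>) (\<lambda>z. a *\<^sub>R fst z + b *\<^sub>R snd z) (\<nu> \<Otimes>\<^sub>M \<rho>) (\<lambda>z. a *\<^sub>R fst z + b *\<^sub>R snd z)"
  have m1: "integrable (\<mu> \<Otimes>\<^sub>M \<rho>) (\<lambda>z. norm (a *\<^sub>R fst z + b *\<^sub>R snd z) powr \<alpha>)"
    using moment_pair_affine[OF P(1,3) id(1,3) mom(1,3) a0, of a b] by simp
  have m2: "integrable (\<nu> \<Otimes>\<^sub>M \<rho>) (\<lambda>z. norm (a *\<^sub>R fst z + b *\<^sub>R snd z) powr \<alpha>)"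
    using moment_pair_affine[OF P(2,3) id(2,3) mom(2,3) a0, of a b] by simp
  have intG: "integrable ((\<mu> \<Otimes>\<^sub>M \<rho>) \<Otimes>\<^sub>M (\<nu> \<Otimes>\<^sub>M \<rho>))
      (\<lambda>p. norm ((\<lambda>z. a *\<^sub>R fst z + b *\<^sub>R snd z) (fst p) - (\<lambda>z. a *\<^sub>R fst z + b *\<^sub>R snd z) (snd p)) powr \<alpha>)"
    by (rule integrable_J[OF MR.prob_space_axioms NR.prob_space_axioms _ _ m1 m2 a0]) measurable
  have L: "(\<integral>\<^sup>+p. ennreal (norm (a *\<^sub>R fst (fst p) + b *\<^sub>R snd (fst p) - (a *\<^sub>R fst (snd p) + b *\<^sub>R snd (snd p))) powr \<alpha>)
      \<partial>((\<mu> \<Otimes>\<^sub>M \<rho>) \<Otimes>\<^sub>M (\<nu> \<Otimes>\<^sub>M \<rho>))) = ennreal LHS"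
    unfolding LHS_def Jint_def by (rule nn_integral_eq_integral[OF intG]) simp
  define F :: "('a \<times> 'a) \<times> ('a \<times> 'a) \<Rightarrow> ennreal" where "F = (\<lambda>p. ennreal (norm (a *\<^sub>R fst (fst p) + b *\<^sub>R snd (fst p) - (a *\<^sub>R fst (snd p) + b *\<^sub>R snd (snd p))) powr \<alpha>))"
  have mF: "F \<in> borel_measurable ((\<mu> \<Otimes>\<^sub>M \<rho>) \<Otimes>\<^sub>M (\<nu> \<Otimes>\<^sub>M \<rho>))" unfolding F_def by measurable
  have "(\<integral>\<^sup>+p. ennreal (norm (a *\<^sub>R fst (fst p) + b *\<^sub>R snd (fst p) - (a *\<^sub>R fst (snd p) + b *\<^sub>R snd (snd p))) powr \<alpha>)
      \<partial>((\<mu> \<Otimes>\<^sub>M \<rho>) \<Otimes>\<^sub>M (\<nu> \<Otimes>\<^sub>M \<rho>))) = integral\<^sup>N ((\<mu> \<Otimes>\<^sub>M \<rho>) \<Otimes>\<^sub>M (\<nu> \<Otimes>\<^sub>M \<rho>)) F"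
    unfolding F_def ..
  also have "\<dots> = (\<integral>\<^sup>+u. (\<integral>\<^sup>+v. F (u, v) \<partial>(\<nu> \<Otimes>\<^sub>M \<rho>)) \<partial>(\<mu> \<Otimes>\<^sub>M \<rho>))"
    by (rule NR.nn_integral_fst[symmetric, OF mF])
  also have "\<dots> = (\<integral>\<^sup>+u. (\<integral>\<^sup>+v. g (fst u) (snd u) (fst v) (snd v) \<partial>(\<nu> \<Otimes>\<^sub>M \<rho>)) \<partial>(\<mu> \<Otimes>\<^sub>M \<rho>))"
    unfolding F_def g_def by simp
  also have "\<dots> = (\<integral>\<^sup>+u. (\<integral>\<^sup>+y. \<integral>\<^sup>+q'. g (fst u) (snd u) y q' \<partial>\<rho> \<partial>\<nu>) \<partial>(\<mu> \<Otimes>\<^sub>M \<rho>))"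
  proof (rule nn_integral_cong)
    fix u :: "'a \<times> 'a"
    have m: "(\<lambda>v. g (fst u) (snd u) (fst v) (snd v)) \<in> borel_measurable (\<nu> \<Otimes>\<^sub>M \<rho>)"
      unfolding g_def by measurable
    show "(\<integral>\<^sup>+v. g (fst u) (snd u) (fst v) (snd v) \<partial>(\<nu> \<Otimes>\<^sub>M \<rho>)) = (\<integral>\<^sup>+y. \<integral>\<^sup>+q'. g (fst u) (snd u) y q' \<partial>\<rho> \<partial>\<nu>)"
      using R.nn_integral_fst[OF m] by simp
  qed
  also have "\<dots> = (\<integral>\<^sup>+x. \<integral>\<^sup>+q. (\<integral>\<^sup>+y. \<integral>\<^sup>+q'. g x q y q' \<partial>\<rho> \<partial>\<nu>) \<partial>\<rho> \<partial>\<mu>)"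
  proof -
    have m: "(\<lambda>u. (\<integral>\<^sup>+y. \<integral>\<^sup>+q'. g (fst u) (snd u) y q' \<partial>\<rho> \<partial>\<nu>)) \<in> borel_measurable (\<mu> \<Otimes>\<^sub>M \<rho>)"
      unfolding g_def by measurable
    show ?thesis using R.nn_integral_fst[OF m] by simp
  qed
  also have "\<dots> = (\<integral>\<^sup>+x. \<integral>\<^sup>+q. (\<integral>\<^sup>+q'. \<integral>\<^sup>+y. g x q y q' \<partial>\<nu> \<partial>\<rho>) \<partial>\<rho> \<partial>\<mu>)"
  proof (intro nn_integral_cong)
    fix x q :: 'a
    have m: "(\<lambda>(y, q'). g x q y q') \<in> borel_measurable (\<nu> \<Otimes>\<^sub>M \<rho>)"
      unfolding g_def by measurable
    show "(\<integral>\<^sup>+y. \<integral>\<^sup>+q'. g x q y q' \<partial>\<rho> \<partial>\<nu>) = (\<integral>\<^sup>+q'. \<integral>\<^sup>+y. g x q y q' \<partial>\<nu> \<partial>\<rho>)"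
      using NR.Fubini'[OF m] by simp
  qed
  also have "\<dots> = (\<integral>\<^sup>+q. \<integral>\<^sup>+x. (\<integral>\<^sup>+q'. \<integral>\<^sup>+y. g x q y q' \<partial>\<nu> \<partial>\<rho>) \<partial>\<mu> \<partial>\<rho>)"
  proof -
    have m: "(\<lambda>(x, q). (\<integral>\<^sup>+q'. \<integral>\<^sup>+y. g x q y q' \<partial>\<nu> \<partial>\<rho>)) \<in> borel_measurable (\<mu> \<Otimes>\<^sub>M \<rho>)"
      unfolding g_def by measurable
    show ?thesis using MR.Fubini'[OF m] by simp
  qed
  also have "\<dots> = (\<integral>\<^sup>+q. \<integral>\<^sup>+q'. (\<integral>\<^sup>+x. \<integral>\<^sup>+y. g x q y q' \<partial>\<nu> \<partial>\<mu>) \<partial>\<rho> \<partial>\<rho>)"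
  proof (intro nn_integral_cong)
    fix q :: 'a
    have m: "(\<lambda>(x, q'). (\<integral>\<^sup>+y. g x q y q' \<partial>\<nu>)) \<in> borel_measurable (\<mu> \<Otimes>\<^sub>M \<rho>)"
      unfolding g_def by measurable
    show "(\<integral>\<^sup>+x. (\<integral>\<^sup>+q'. \<integral>\<^sup>+y. g x q y q' \<partial>\<nu> \<partial>\<rho>) \<partial>\<mu>) = (\<integral>\<^sup>+q'. (\<integral>\<^sup>+x. \<integral>\<^sup>+y. g x q y q' \<partial>\<nu> \<partial>\<mu>) \<partial>\<rho>)"
      using MR.Fubini'[OF m] by simp
  qed
  also have "\<dots> = (\<integral>\<^sup>+w. (\<integral>\<^sup>+x. \<integral>\<^sup>+y. g x (fst w) y (snd w) \<partial>\<nu> \<partial>\<mu>) \<partial>(\<rho> \<Otimes>\<^sub>M \<rho>))"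
  proof -
    have m: "(\<lambda>w. (\<integral>\<^sup>+x. \<integral>\<^sup>+y. g x (fst w) y (snd w) \<partial>\<nu> \<partial>\<mu>)) \<in> borel_measurable (\<rho> \<Otimes>\<^sub>M \<rho>)"
      unfolding g_def by measurable
    show ?thesis using R.nn_integral_fst[OF m] by simp
  qed
  also have "\<dots> = (\<integral>\<^sup>+w. (\<integral>\<^sup>+z. g (fst z) (fst w) (snd z) (snd w) \<partial>(\<mu> \<Otimes>\<^sub>M \<nu>)) \<partial>(\<rho> \<Otimes>\<^sub>M \<rho>))"
  proof (rule nn_integral_cong)
    fix w :: "'a \<times> 'a"
    have m: "(\<lambda>z. g (fst z) (fst w) (snd z) (snd w)) \<in> borel_measurable (\<mu> \<Otimes>\<^sub>M \<nu>)"
      unfolding g_def by measurable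
    show "(\<integral>\<^sup>+x. \<integral>\<^sup>+y. g x (fst w) y (snd w) \<partial>\<nu> \<partial>\<mu>) = (\<integral>\<^sup>+z. g (fst z) (fst w) (snd z) (snd w) \<partial>(\<mu> \<Otimes>\<^sub>M \<nu>))"
      using N.nn_integral_fst[OF m] by simp
  qed
  finally have LR: "(\<integral>\<^sup>+w. (\<integral>\<^sup>+z. g (fst z) (fst w) (snd z) (snd w) \<partial>(\<mu> \<Otimes>\<^sub>M \<nu>)) \<partial>(\<rho> \<Otimes>\<^sub>M \<rho>)) = ennreal LHS"
    using L by simp
  define K where "K = (\<lambda>w. Jint \<alpha> \<mu> (\<lambda>x. a *\<^sub>R x + b *\<^sub>R fst w) \<nu> (\<lambda>y. a *\<^sub>R y + b *\<^sub>R snd w))"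
  define Kn where "Kn = (\<lambda>w. (\<integral>\<^sup>+z. g (fst z) (fst w) (snd z) (snd w) \<partial>(\<mu> \<Otimes>\<^sub>M \<nu>)))"
  have mKn: "Kn \<in> borel_measurable (\<rho> \<Otimes>\<^sub>M \<rho>)" unfolding Kn_def g_def by measurable
  have KKn: "K w = enn2real (Kn w)" for w
  proof -
    have m: "(\<lambda>z. norm (a *\<^sub>R fst z + b *\<^sub>R fst w - (a *\<^sub>R snd z + b *\<^sub>R snd w)) powr \<alpha>) \<in> borel_measurable (\<mu> \<Otimes>\<^sub>M \<nu>)"
      by measurable
    show ?thesis unfolding K_def Kn_def Jint_def g_def using integral_eq_nn_integral[OF m] by simp
  qed
  have mK: "K \<in> borel_measurable (\<rho> \<Otimes>\<^sub>M \<rho>)"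
  proof -
    have "(\<lambda>(w, z). norm (a *\<^sub>R fst z + b *\<^sub>R fst w - (a *\<^sub>R snd z + b *\<^sub>R snd w)) powr \<alpha>)
        \<in> borel_measurable ((\<rho> \<Otimes>\<^sub>M \<rho>) \<Otimes>\<^sub>M (\<mu> \<Otimes>\<^sub>M \<nu>))" by measurable
    then have "(\<lambda>w. \<integral>z. norm (a *\<^sub>R fst z + b *\<^sub>R fst w - (a *\<^sub>R snd z + b *\<^sub>R snd w)) powr \<alpha> \<partial>(\<mu> \<Otimes>\<^sub>M \<nu>))
        \<in> borel_measurable (\<rho> \<Otimes>\<^sub>M \<rho>)"
      by (rule MN.borel_measurable_lebesgue_integral)
    then show ?thesis unfolding K_def Jint_def .
  qed
  have "AE w in \<rho> \<Otimes>\<^sub>M \<rho>. Kn w \<noteq> \<infinity>"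
    by (rule nn_integral_PInf_AE[OF mKn]) (use LR in \<open>simp add: Kn_def\<close>)
  then have "(\<integral>\<^sup>+w. ennreal (K w) \<partial>(\<rho> \<Otimes>\<^sub>M \<rho>)) = (\<integral>\<^sup>+w. Kn w \<partial>(\<rho> \<Otimes>\<^sub>M \<rho>))"
    by (intro nn_integral_cong_AE) (auto simp: KKn less_top[symmetric] elim!: eventually_mono)
  also have "\<dots> = ennreal LHS" using LR unfolding Kn_def .
  finally have KL: "(\<integral>\<^sup>+w. ennreal (K w) \<partial>(\<rho> \<Otimes>\<^sub>M \<rho>)) = ennreal LHS" .
  have K0: "0 \<le> K w" for w unfolding KKn by simp
  show "integrable (\<rho> \<Otimes>\<^sub>M \<rho>) (\<lambda>w. Jint \<alpha> \<mu> (\<lambda>x. a *\<^sub>R x + b *\<^sub>R fst w) \<nu> (\<lambda>y. a *\<^sub>R y + b *\<^sub>R snd w))"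
    using integrableI_nn_integral_finite[OF mK _ KL] K0 unfolding K_def by simp
  have L0: "0 \<le> LHS" unfolding LHS_def Jint_def by (rule integral_nonneg_AE) simp
  show "Jint \<alpha> (\<mu> \<Otimes>\<^sub>M \<rho>) (\<lambda>z. a *\<^sub>R fst z + b *\<^sub>R snd z) (\<nu> \<Otimes>\<^sub>M \<rho>) (\<lambda>z. a *\<^sub>R fst z + b *\<^sub>R snd z)
       = (\<integral>w. Jint \<alpha> \<mu> (\<lambda>x. a *\<^sub>R x + b *\<^sub>R fst w) \<nu> (\<lambda>y. a *\<^sub>R y + b *\<^sub>R snd w) \<partial>(\<rho> \<Otimes>\<^sub>M \<rho>))"
    using integral_eq_nn_integral[OF mK] KL K0 L0 unfolding K_def LHS_def by simp
qed

lemma Jint_scale_shift: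
  fixes \<mu> \<nu> :: "'a::euclidean_space measure"
  assumes "0 \<le> a"
  shows "Jint \<alpha> \<mu> (\<lambda>x. a *\<^sub>R x + q) \<nu> (\<lambda>y. a *\<^sub>R y + q) = a powr \<alpha> * energy_int \<alpha> \<mu> \<nu>"
proof -
  have "norm (a *\<^sub>R x + q - (a *\<^sub>R y + q)) powr \<alpha> = a powr \<alpha> * norm (x - y) powr \<alpha>" for x y :: 'a
  proof -
    have "a *\<^sub>R x + q - (a *\<^sub>R y + q) = a *\<^sub>R (x - y)" by (simp add: algebra_simps)
    then show ?thesis using assms by (simp add: powr_mult)
  qed
  then show ?thesis unfolding Jint_def energy_int_def energy_kernel_def by simp
qed

lemma contraction_pw:
  fixes \<mu> \<nu> :: "'a::euclidean_space measure"
  assumes a0: "0 < \<alpha>" and P: "prob_space \<mu>" "prob_space \<nu>"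
    and S[measurable_cong]: "sets \<mu> = sets borel" "sets \<nu> = sets borel"
    and mom: "integrable \<mu> (\<lambda>x. norm x powr \<alpha>)" "integrable \<nu> (\<lambda>x. norm x powr \<alpha>)"
    and em: "equal_moments_upto l \<mu> \<nu>" and kl: "nat \<lfloor>\<alpha> / 2\<rfloor> \<le> l" and ap: "0 \<le> a"
  shows "(-1) ^ (nat \<lfloor>\<alpha> / 2\<rfloor> + 1) *
     (Jint \<alpha> \<mu> (\<lambda>x. a *\<^sub>R x + b *\<^sub>R q) \<mu> (\<lambda>y. a *\<^sub>R y + b *\<^sub>R q')
      - Jint \<alpha> \<mu> (\<lambda>x. a *\<^sub>R x + b *\<^sub>R q) \<nu> (\<lambda>y. a *\<^sub>R y + b *\<^sub>R q')
      - Jint \<alpha> \<nu> (\<lambda>x. a *\<^sub>R x + b *\<^sub>R q) \<mu> (\<lambda>y. a *\<^sub>R y + b *\<^sub>R q')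
      + Jint \<alpha> \<nu> (\<lambda>x. a *\<^sub>R x + b *\<^sub>R q) \<nu> (\<lambda>y. a *\<^sub>R y + b *\<^sub>R q'))
     \<le> a powr \<alpha> * energy_sq \<alpha> \<mu> \<nu>"
proof -
  define k where "k = nat \<lfloor>\<alpha> / 2\<rfloor>"
  define M4 :: "nat \<Rightarrow> 'a measure" where "M4 = (\<lambda>i. if i = 0 \<or> i = 2 then \<mu> else \<nu>)"
  define f4 :: "nat \<Rightarrow> 'a \<Rightarrow> 'a" where "f4 = (\<lambda>i. if i < 2 then (\<lambda>x. a *\<^sub>R x + b *\<^sub>R q) else (\<lambda>x. a *\<^sub>R x + b *\<^sub>R q'))"
  define c4 :: "nat \<Rightarrow> real" where "c4 = (\<lambda>i. if i = 0 \<or> i = 3 then 1 else -1)"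
  define S4 where "S4 = {0, 1, 2, 3::nat}"
  have PS: "prob_space (M4 i)" for i unfolding M4_def using P by auto
  have MF: "f4 i \<in> borel_measurable (M4 i)" for i
  proof -
    have "(\<lambda>x. a *\<^sub>R x + b *\<^sub>R q) \<in> borel_measurable \<mu>" "(\<lambda>x. a *\<^sub>R x + b *\<^sub>R q) \<in> borel_measurable \<nu>"
      "(\<lambda>x. a *\<^sub>R x + b *\<^sub>R q') \<in> borel_measurable \<mu>" "(\<lambda>x. a *\<^sub>R x + b *\<^sub>R q') \<in> borel_measurable \<nu>"
      by measurable
    then show ?thesis unfolding M4_def f4_def by auto
  qed
  have MO: "integrable (M4 i) (\<lambda>x. norm (f4 i x) powr \<alpha>)" for i
  proof -
    have i1: "(\<lambda>x. x) \<in> borel_measurable \<mu>" "(\<lambda>x. x) \<in> borel_measurable \<nu>" by measurable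
    show ?thesis unfolding M4_def f4_def
      using moment_affine[OF P(1) i1(1) mom(1), of a] moment_affine[OF P(2) i1(2) mom(2), of a] a0
      by auto
  qed
  have AN: "(\<Sum>i\<in>S4. c4 i * (\<integral>x. p (f4 i x) \<partial>M4 i)) = 0" if p: "mpoly_le (nat \<lfloor>\<alpha> / 2\<rfloor>) p" for p
  proof -
    have e1: "(\<integral>x. p (a *\<^sub>R x + b *\<^sub>R q) \<partial>\<mu>) = (\<integral>x. p (a *\<^sub>R x + b *\<^sub>R q) \<partial>\<nu>)"
      by (rule equal_moments_mpoly[OF em kl mpoly_le_affine[OF p]])
    have e2: "(\<integral>x. p (a *\<^sub>R x + b *\<^sub>R q') \<partial>\<mu>) = (\<integral>x. p (a *\<^sub>R x + b *\<^sub>R q') \<partial>\<nu>)"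
      by (rule equal_moments_mpoly[OF em kl mpoly_le_affine[OF p]])
    show ?thesis unfolding S4_def c4_def M4_def f4_def using e1 e2 by simp
  qed
  define J where "J = (\<lambda>i j. Jint \<alpha> (M4 i) (f4 i) (M4 j) (f4 j))"
  have psd: "0 \<le> (-1) ^ (nat \<lfloor>\<alpha> / 2\<rfloor> + 1) * (\<Sum>i\<in>S4. \<Sum>j\<in>S4. c4 i * c4 j * J i j)"
    unfolding J_def by (rule energy_psd[OF a0 _ PS MF MO AN]) (simp add: S4_def)
  have sym: "J i j = J j i" for i j unfolding J_def by (rule Jint_sym[OF PS PS MF MF])
  have sum16: "(\<Sum>i\<in>S4. \<Sum>j\<in>S4. c4 i * c4 j * J i j) =
      (J 0 0 - 2 * J 0 1 + J 1 1) + (J 2 2 - 2 * J 2 3 + J 3 3) - 2 * (J 0 2 - J 0 3 - J 1 2 + J 1 3)"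
    unfolding S4_def c4_def
    using sym[of 1 0] sym[of 2 0] sym[of 3 0] sym[of 2 1] sym[of 3 1] sym[of 3 2] by simp
  have JE: "J 0 0 = a powr \<alpha> * energy_int \<alpha> \<mu> \<mu>" "J 0 1 = a powr \<alpha> * energy_int \<alpha> \<mu> \<nu>"
      "J 1 1 = a powr \<alpha> * energy_int \<alpha> \<nu> \<nu>"
      "J 2 2 = a powr \<alpha> * energy_int \<alpha> \<mu> \<mu>" "J 2 3 = a powr \<alpha> * energy_int \<alpha> \<mu> \<nu>"
      "J 3 3 = a powr \<alpha> * energy_int \<alpha> \<nu> \<nu>"
    unfolding J_def M4_def f4_def by (auto simp: Jint_scale_shift[OF ap])
  define E where "E = a powr \<alpha> * energy_sq \<alpha> \<mu> \<nu>"
  define sg :: real where "sg = (-1) ^ (k + 1)"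
  have blk0: "sg * (J 0 0 - 2 * J 0 1 + J 1 1) = E"
    unfolding JE E_def sg_def energy_sq_def k_def by (simp add: algebra_simps)
  have blk2: "sg * (J 2 2 - 2 * J 2 3 + J 3 3) = E"
    unfolding JE E_def sg_def energy_sq_def k_def by (simp add: algebra_simps)
  have XE: "Jint \<alpha> \<mu> (\<lambda>x. a *\<^sub>R x + b *\<^sub>R q) \<mu> (\<lambda>y. a *\<^sub>R y + b *\<^sub>R q')
      - Jint \<alpha> \<mu> (\<lambda>x. a *\<^sub>R x + b *\<^sub>R q) \<nu> (\<lambda>y. a *\<^sub>R y + b *\<^sub>R q')
      - Jint \<alpha> \<nu> (\<lambda>x. a *\<^sub>R x + b *\<^sub>R q) \<mu> (\<lambda>y. a *\<^sub>R y + b *\<^sub>R q')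
      + Jint \<alpha> \<nu> (\<lambda>x. a *\<^sub>R x + b *\<^sub>R q) \<nu> (\<lambda>y. a *\<^sub>R y + b *\<^sub>R q') = J 0 2 - J 0 3 - J 1 2 + J 1 3"
    unfolding J_def M4_def f4_def by simp
  have ps: "0 \<le> sg * ((J 0 0 - 2 * J 0 1 + J 1 1) + (J 2 2 - 2 * J 2 3 + J 3 3)
      - 2 * (J 0 2 - J 0 3 - J 1 2 + J 1 3))"
    using psd unfolding sum16 k_def sg_def .
  have dist: "sg * ((J 0 0 - 2 * J 0 1 + J 1 1) + (J 2 2 - 2 * J 2 3 + J 3 3)
      - 2 * (J 0 2 - J 0 3 - J 1 2 + J 1 3)) = sg * (J 0 0 - 2 * J 0 1 + J 1 1) + sg * (J 2 2 - 2 * J 2 3 + J 3 3)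
      - 2 * (sg * (J 0 2 - J 0 3 - J 1 2 + J 1 3))"
    by (simp only: algebra_simps)
  have "sg * (J 0 2 - J 0 3 - J 1 2 + J 1 3) \<le> E" using ps dist blk0 blk2 by linarith
  then show ?thesis unfolding XE k_def[symmetric] sg_def[symmetric] E_def .
qed

lemma contraction:
  fixes \<mu> \<nu> \<rho> :: "'a::euclidean_space measure"
  assumes a0: "0 < \<alpha>" and P: "prob_space \<mu>" "prob_space \<nu>" "prob_space \<rho>"
    and S[measurable_cong]: "sets \<mu> = sets borel" "sets \<nu> = sets borel" "sets \<rho> = sets borel"
    and mom: "integrable \<mu> (\<lambda>x. norm x powr \<alpha>)" "integrable \<nu> (\<lambda>x. norm x powr \<alpha>)" "integrable \<rho> (\<lambda>x. norm x powr \<alpha>)"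
    and em: "equal_moments_upto l \<mu> \<nu>" and kl: "nat \<lfloor>\<alpha> / 2\<rfloor> \<le> l" and ap: "0 \<le> a"
  shows "(-1) ^ (nat \<lfloor>\<alpha> / 2\<rfloor> + 1) *
     (Jint \<alpha> (\<mu> \<Otimes>\<^sub>M \<rho>) (\<lambda>z. a *\<^sub>R fst z + b *\<^sub>R snd z) (\<mu> \<Otimes>\<^sub>M \<rho>) (\<lambda>z. a *\<^sub>R fst z + b *\<^sub>R snd z)
      - 2 * Jint \<alpha> (\<mu> \<Otimes>\<^sub>M \<rho>) (\<lambda>z. a *\<^sub>R fst z + b *\<^sub>R snd z) (\<nu> \<Otimes>\<^sub>M \<rho>) (\<lambda>z. a *\<^sub>R fst z + b *\<^sub>R snd z)
      + Jint \<alpha> (\<nu> \<Otimes>\<^sub>M \<rho>) (\<lambda>z. a *\<^sub>R fst z + b *\<^sub>R snd z) (\<nu> \<Otimes>\<^sub>M \<rho>) (\<lambda>z. a *\<^sub>R fst z + b *\<^sub>R snd z))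
     \<le> a powr \<alpha> * energy_sq \<alpha> \<mu> \<nu>"
proof -
  interpret R: prob_space \<rho> by fact
  interpret MR: pair_prob_space \<mu> \<rho> using P by (simp add: pair_prob_space_def pair_sigma_finite_def prob_space_imp_sigma_finite)
  interpret NR: pair_prob_space \<nu> \<rho> using P by (simp add: pair_prob_space_def pair_sigma_finite_def prob_space_imp_sigma_finite)
  interpret RR: pair_prob_space \<rho> \<rho> by unfold_locales
  have a00: "0 \<le> \<alpha>" using a0 by simp
  define h where "h = (\<lambda>z::'a \<times> 'a. a *\<^sub>R fst z + b *\<^sub>R snd z)"
  define K where "K = (\<lambda>X Y (w::'a \<times> 'a). Jint \<alpha> X (\<lambda>x. a *\<^sub>R x + b *\<^sub>R fst w) Y (\<lambda>y. a *\<^sub>R y + b *\<^sub>R snd w))"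
  note r11 = J_rearr[OF P(1) P(1) P(3) S(1) S(1) S(3) mom(1) mom(1) mom(3) a00, of a b]
  note r12 = J_rearr[OF P(1) P(2) P(3) S(1) S(2) S(3) mom(1) mom(2) mom(3) a00, of a b]
  note r21 = J_rearr[OF P(2) P(1) P(3) S(2) S(1) S(3) mom(2) mom(1) mom(3) a00, of a b]
  note r22 = J_rearr[OF P(2) P(2) P(3) S(2) S(2) S(3) mom(2) mom(2) mom(3) a00, of a b]
  have mh1: "h \<in> borel_measurable (\<mu> \<Otimes>\<^sub>M \<rho>)" unfolding h_def by measurable
  have mh2: "h \<in> borel_measurable (\<nu> \<Otimes>\<^sub>M \<rho>)" unfolding h_def by measurable
  have sym: "Jint \<alpha> (\<nu> \<Otimes>\<^sub>M \<rho>) h (\<mu> \<Otimes>\<^sub>M \<rho>) h = Jint \<alpha> (\<mu> \<Otimes>\<^sub>M \<rho>) h (\<nu> \<Otimes>\<^sub>M \<rho>) h"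
    by (rule Jint_sym[OF NR.prob_space_axioms MR.prob_space_axioms mh2 mh1])
  define sg :: real where "sg = (-1) ^ (nat \<lfloor>\<alpha> / 2\<rfloor> + 1)"
  define E where "E = a powr \<alpha> * energy_sq \<alpha> \<mu> \<nu>"
  have i11: "integrable (\<rho> \<Otimes>\<^sub>M \<rho>) (K \<mu> \<mu>)" and e11: "Jint \<alpha> (\<mu> \<Otimes>\<^sub>M \<rho>) h (\<mu> \<Otimes>\<^sub>M \<rho>) h = integral\<^sup>L (\<rho> \<Otimes>\<^sub>M \<rho>) (K \<mu> \<mu>)"
    using r11 unfolding K_def h_def by auto
  have i12: "integrable (\<rho> \<Otimes>\<^sub>M \<rho>) (K \<mu> \<nu>)" and e12: "Jint \<alpha> (\<mu> \<Otimes>\<^sub>M \<rho>) h (\<nu> \<Otimes>\<^sub>M \<rho>) h = integral\<^sup>L (\<rho> \<Otimes>\<^sub>M \<rho>) (K \<mu> \<nu>)"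
    using r12 unfolding K_def h_def by auto
  have i21: "integrable (\<rho> \<Otimes>\<^sub>M \<rho>) (K \<nu> \<mu>)" and e21: "Jint \<alpha> (\<nu> \<Otimes>\<^sub>M \<rho>) h (\<mu> \<Otimes>\<^sub>M \<rho>) h = integral\<^sup>L (\<rho> \<Otimes>\<^sub>M \<rho>) (K \<nu> \<mu>)"
    using r21 unfolding K_def h_def by auto
  have i22: "integrable (\<rho> \<Otimes>\<^sub>M \<rho>) (K \<nu> \<nu>)" and e22: "Jint \<alpha> (\<nu> \<Otimes>\<^sub>M \<rho>) h (\<nu> \<Otimes>\<^sub>M \<rho>) h = integral\<^sup>L (\<rho> \<Otimes>\<^sub>M \<rho>) (K \<nu> \<nu>)"
    using r22 unfolding K_def h_def by auto
  define D where "D = (\<lambda>w. sg * (K \<mu> \<mu> w - K \<mu> \<nu> w - K \<nu> \<mu> w + K \<nu> \<nu> w))"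
  have iD: "integrable (\<rho> \<Otimes>\<^sub>M \<rho>) D" unfolding D_def using i11 i12 i21 i22 by simp
  have "sg * (Jint \<alpha> (\<mu> \<Otimes>\<^sub>M \<rho>) h (\<mu> \<Otimes>\<^sub>M \<rho>) h - 2 * Jint \<alpha> (\<mu> \<Otimes>\<^sub>M \<rho>) h (\<nu> \<Otimes>\<^sub>M \<rho>) h + Jint \<alpha> (\<nu> \<Otimes>\<^sub>M \<rho>) h (\<nu> \<Otimes>\<^sub>M \<rho>) h)
      = sg * (integral\<^sup>L (\<rho> \<Otimes>\<^sub>M \<rho>) (K \<mu> \<mu>) - integral\<^sup>L (\<rho> \<Otimes>\<^sub>M \<rho>) (K \<mu> \<nu>) - integral\<^sup>L (\<rho> \<Otimes>\<^sub>M \<rho>) (K \<nu> \<mu>) + integral\<^sup>L (\<rho> \<Otimes>\<^sub>M \<rho>) (K \<nu> \<nu>))"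
    using sym e11 e12 e21 e22 by simp
  also have "\<dots> = integral\<^sup>L (\<rho> \<Otimes>\<^sub>M \<rho>) D"
    unfolding D_def using i11 i12 i21 i22 by simp
  also have "\<dots> \<le> integral\<^sup>L (\<rho> \<Otimes>\<^sub>M \<rho>) (\<lambda>_. E)"
  proof (rule integral_mono[OF iD])
    show "integrable (\<rho> \<Otimes>\<^sub>M \<rho>) (\<lambda>_. E)" by simp
    fix w assume "w \<in> space (\<rho> \<Otimes>\<^sub>M \<rho>)"
    show "D w \<le> E" unfolding D_def K_def sg_def E_def
      by (rule contraction_pw[OF a0 P(1,2) S(1,2) mom(1,2) em kl ap])
  qed
  also have "\<dots> = E" by (simp add: RR.prob_space)
  finally show ?thesis unfolding sg_def E_def h_def .
qed

lemma tri_quad: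
  fixes X Y Z :: real
  assumes q: "\<And>s t. 0 \<le> s^2 * X + 2 * s * t * Z + t^2 * Y"
  shows "sqrt (X + 2 * Z + Y) \<le> sqrt X + sqrt Y"
proof -
  have X0: "0 \<le> X" using q[of 1 0] by simp
  have Y0: "0 \<le> Y" using q[of 0 1] by simp
  have Zle: "Z \<le> sqrt X * sqrt Y"
  proof (cases "X = 0")
    case True
    show ?thesis
    proof (rule ccontr)
      assume "\<not> ?thesis"
      then have Zp: "0 < Z" using True by simp
      define t where "t = - Z / (Y + 1)"
      have Y1: "0 < Y + 1" using Y0 by simp
      have w: "(Y + 1) * t = - Z" unfolding t_def using Y1 by simp
      have "0 \<le> (Y + 1)^2 * (2 * t * Z + t^2 * Y)" using q[of 1 t] True by simp
      also have "(Y + 1)^2 * (2 * t * Z + t^2 * Y) = 2 * (Y + 1) * ((Y + 1) * t) * Z + ((Y + 1) * t)^2 * Y"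
        by (simp add: algebra_simps power2_eq_square)
      also have "\<dots> = - (Z^2 * (Y + 2))" unfolding w by (simp add: algebra_simps power2_eq_square)
      also have "\<dots> < 0" using Zp Y0 by (simp add: mult_pos_pos)
      finally show False by simp
    qed
  next
    case Xn: False
    show ?thesis
    proof (cases "Y = 0")
      case True
      show ?thesis
      proof (rule ccontr)
        assume "\<not> ?thesis"
        then have Zp: "0 < Z" using True by simp
        define s where "s = - Z / (X + 1)"
        have X1: "0 < X + 1" using X0 by simp
        have w: "(X + 1) * s = - Z" unfolding s_def using X1 by simp
        have "0 \<le> (X + 1)^2 * (s^2 * X + 2 * s * Z)" using q[of s 1] True by simp
        also have "(X + 1)^2 * (s^2 * X + 2 * s * Z) = ((X + 1) * s)^2 * X + 2 * (X + 1) * ((X + 1) * s) * Z"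
          by (simp add: algebra_simps power2_eq_square)
        also have "\<dots> = - (Z^2 * (X + 2))" unfolding w by (simp add: algebra_simps power2_eq_square)
        also have "\<dots> < 0" using Zp X0 by (simp add: mult_pos_pos)
        finally show False by simp
      qed
    next
      case False
      have Xp: "0 < X" and Yp: "0 < Y" using X0 Y0 Xn False by auto
      have "0 \<le> (sqrt Y)^2 * X + 2 * sqrt Y * (- sqrt X) * Z + (- sqrt X)^2 * Y"
        by (rule q)
      then have "0 \<le> 2 * (X * Y) - 2 * (sqrt X * sqrt Y) * Z"
        using X0 Y0 by (simp add: algebra_simps)
      then have "(sqrt X * sqrt Y) * Z \<le> (sqrt X * sqrt Y) * (sqrt X * sqrt Y)"
        using X0 Y0 by (simp add: algebra_simps)
      moreover have "0 < sqrt X * sqrt Y" using Xp Yp by simp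
      ultimately show ?thesis using mult_le_cancel_left_pos by blast
    qed
  qed
  have "X + 2 * Z + Y \<le> (sqrt X + sqrt Y)^2"
    using Zle X0 Y0 by (simp add: power2_eq_square algebra_simps)
  then have "sqrt (X + 2 * Z + Y) \<le> sqrt ((sqrt X + sqrt Y)^2)" by (rule real_sqrt_le_mono)
  also have "\<dots> = sqrt X + sqrt Y" using X0 Y0 by simp
  finally show ?thesis .
qed

lemma Jint_pair_swap:
  fixes X Y X' Y' :: "'a::euclidean_space measure"
  assumes P: "prob_space X" "prob_space Y" "prob_space X'" "prob_space Y'"
    and S[measurable_cong]: "sets X = sets borel" "sets Y = sets borel" "sets X' = sets borel" "sets Y' = sets borel"
  shows "Jint \<alpha> (X \<Otimes>\<^sub>M Y) (\<lambda>z. a *\<^sub>R fst z + b *\<^sub>R snd z) (X' \<Otimes>\<^sub>M Y') (\<lambda>z. a *\<^sub>R fst z + b *\<^sub>R snd z) =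
    Jint \<alpha> (Y \<Otimes>\<^sub>M X) (\<lambda>z. b *\<^sub>R fst z + a *\<^sub>R snd z) (Y' \<Otimes>\<^sub>M X') (\<lambda>z. b *\<^sub>R fst z + a *\<^sub>R snd z)"
proof -
  interpret XY: pair_prob_space X Y using P by (simp add: pair_prob_space_def pair_sigma_finite_def prob_space_imp_sigma_finite)
  interpret YX: pair_prob_space Y X using P by (simp add: pair_prob_space_def pair_sigma_finite_def prob_space_imp_sigma_finite)
  interpret XY': pair_prob_space X' Y' using P by (simp add: pair_prob_space_def pair_sigma_finite_def prob_space_imp_sigma_finite)
  interpret YX': pair_prob_space Y' X' using P by (simp add: pair_prob_space_def pair_sigma_finite_def prob_space_imp_sigma_finite)
  have "Jint \<alpha> (X \<Otimes>\<^sub>M Y) (\<lambda>z. a *\<^sub>R fst z + b *\<^sub>R snd z) (X' \<Otimes>\<^sub>M Y') (\<lambda>z. a *\<^sub>R fst z + b *\<^sub>R snd z) =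
      Jint \<alpha> (distr (Y \<Otimes>\<^sub>M X) (X \<Otimes>\<^sub>M Y) (\<lambda>(x, y). (y, x))) (\<lambda>z. a *\<^sub>R fst z + b *\<^sub>R snd z)
        (distr (Y' \<Otimes>\<^sub>M X') (X' \<Otimes>\<^sub>M Y') (\<lambda>(x, y). (y, x))) (\<lambda>z. a *\<^sub>R fst z + b *\<^sub>R snd z)"
    using XY.distr_pair_swap XY'.distr_pair_swap by simp
  also have "\<dots> = Jint \<alpha> (Y \<Otimes>\<^sub>M X) (\<lambda>z. (\<lambda>z. a *\<^sub>R fst z + b *\<^sub>R snd z) ((\<lambda>(x, y). (y, x)) z))
        (Y' \<Otimes>\<^sub>M X') (\<lambda>z. (\<lambda>z. a *\<^sub>R fst z + b *\<^sub>R snd z) ((\<lambda>(x, y). (y, x)) z))"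
    by (rule Jint_distr[OF YX.prob_space_axioms YX'.prob_space_axioms]) measurable
  also have "(\<lambda>z. (\<lambda>z. a *\<^sub>R fst z + b *\<^sub>R snd z) ((\<lambda>(x, y). (y, x)) z)) = (\<lambda>z::'a \<times> 'a. b *\<^sub>R fst z + a *\<^sub>R snd z)"
    by (auto simp: fun_eq_iff add.commute)
  finally show ?thesis .
qed

lemma sqrt_powr_mult:
  assumes "0 < a" "0 \<le> E"
  shows "sqrt (a powr \<alpha> * E) = a powr (\<alpha> / 2) * sqrt E"
proof -
  have "sqrt (a powr \<alpha>) = (a powr \<alpha>) powr (1/2)" using assms by (simp add: powr_half_sqrt)
  also have "\<dots> = a powr (\<alpha> / 2)" by (simp add: powr_powr)
  finally show ?thesis by (simp add: real_sqrt_mult)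
qed

theorem mainTheorem4:
  fixes \<alpha> lam :: real and \<mu>1 \<mu>2 \<nu>1 \<nu>2 :: "'a::euclidean_space measure"
  assumes "\<alpha> \<ge> 4" and "0 < lam" and "lam < 1"
    and "energy_well_defined \<alpha> \<mu>1 \<nu>1"
    and "energy_well_defined \<alpha> \<mu>2 \<nu>2"
    and "energy_well_defined \<alpha> (conv_comb lam \<mu>1 \<mu>2) (conv_comb lam \<nu>1 \<nu>2)"
  shows "energy_dist \<alpha> (conv_comb lam \<mu>1 \<mu>2) (conv_comb lam \<nu>1 \<nu>2)
           \<le> sqrt lam * energy_dist \<alpha> \<mu>1 \<nu>1 + sqrt (1 - lam) * energy_dist \<alpha> \<mu>2 \<nu>2"
proof -
  have a0: "0 < \<alpha>" and a00: "0 \<le> \<alpha>" using assms(1) by auto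
  define k where "k = nat \<lfloor>\<alpha> / 2\<rfloor>"
  have fl0: "0 \<le> \<lfloor>\<alpha> / 2\<rfloor>" using a0 by simp
  have fle: "real_of_int \<lfloor>\<alpha> / 2\<rfloor> \<le> \<alpha> / 2" by (rule of_int_floor_le)
  have "real k = real_of_int \<lfloor>\<alpha> / 2\<rfloor>" unfolding k_def using fl0 by simp
  then have ka: "real k \<le> \<alpha>" using fle a0 by linarith
  obtain l1 where P1: "prob_space \<mu>1" and Q1: "prob_space \<nu>1"
      and S1[measurable_cong]: "sets \<mu>1 = sets borel" and T1[measurable_cong]: "sets \<nu>1 = sets borel"
      and kl1: "nat \<lfloor>\<alpha> / 2\<rfloor> \<le> l1" and em1: "equal_moments_upto l1 \<mu>1 \<nu>1"
      and im1: "integrable (\<mu>1 \<Otimes>\<^sub>M \<mu>1) (energy_kernel \<alpha>)" and in1: "integrable (\<nu>1 \<Otimes>\<^sub>M \<nu>1) (energy_kernel \<alpha>)"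
      and E1: "0 \<le> energy_sq \<alpha> \<mu>1 \<nu>1"
    using assms(4) unfolding energy_well_defined_def by blast
  obtain l2 where P2: "prob_space \<mu>2" and Q2: "prob_space \<nu>2"
      and S2[measurable_cong]: "sets \<mu>2 = sets borel" and T2[measurable_cong]: "sets \<nu>2 = sets borel"
      and kl2: "nat \<lfloor>\<alpha> / 2\<rfloor> \<le> l2" and em2: "equal_moments_upto l2 \<mu>2 \<nu>2"
      and im2: "integrable (\<mu>2 \<Otimes>\<^sub>M \<mu>2) (energy_kernel \<alpha>)" and in2: "integrable (\<nu>2 \<Otimes>\<^sub>M \<nu>2) (energy_kernel \<alpha>)"
      and E2: "0 \<le> energy_sq \<alpha> \<mu>2 \<nu>2"
    using assms(5) unfolding energy_well_defined_def by blast
  have mm1: "integrable \<mu>1 (\<lambda>x. norm x powr \<alpha>)" by (rule moment_from_pair[OF P1 S1 a00 im1])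
  have mn1: "integrable \<nu>1 (\<lambda>x. norm x powr \<alpha>)" by (rule moment_from_pair[OF Q1 T1 a00 in1])
  have mm2: "integrable \<mu>2 (\<lambda>x. norm x powr \<alpha>)" by (rule moment_from_pair[OF P2 S2 a00 im2])
  have mn2: "integrable \<nu>2 (\<lambda>x. norm x powr \<alpha>)" by (rule moment_from_pair[OF Q2 T2 a00 in2])
  have id: "(\<lambda>x. x) \<in> borel_measurable \<mu>1" "(\<lambda>x. x) \<in> borel_measurable \<nu>1"
    "(\<lambda>x. x) \<in> borel_measurable \<mu>2" "(\<lambda>x. x) \<in> borel_measurable \<nu>2" by measurable
  define a where "a = sqrt lam"
  define b where "b = sqrt (1 - lam)"
  have ap: "0 < a" and bp: "0 < b" using assms(2,3) unfolding a_def b_def by auto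
  have a1: "a \<le> 1" and b1: "b \<le> 1" using assms(2,3) unfolding a_def b_def by auto
  define h where "h = (\<lambda>z::'a \<times> 'a. a *\<^sub>R fst z + b *\<^sub>R snd z)"
  define h' where "h' = (\<lambda>z::'a \<times> 'a. b *\<^sub>R fst z + a *\<^sub>R snd z)"
  have cc: "conv_comb lam \<mu> \<nu> = distr (\<mu> \<Otimes>\<^sub>M \<nu>) borel h" for \<mu> \<nu> :: "'a measure"
    unfolding conv_comb_def h_def a_def b_def by (simp add: split_beta')
  interpret A: pair_prob_space \<mu>1 \<mu>2 using P1 P2 by (simp add: pair_prob_space_def pair_sigma_finite_def prob_space_imp_sigma_finite)
  interpret B: pair_prob_space \<nu>1 \<nu>2 using Q1 Q2 by (simp add: pair_prob_space_def pair_sigma_finite_def prob_space_imp_sigma_finite)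
  interpret C: pair_prob_space \<nu>1 \<mu>2 using Q1 P2 by (simp add: pair_prob_space_def pair_sigma_finite_def prob_space_imp_sigma_finite)
  define MA where "MA = \<mu>1 \<Otimes>\<^sub>M \<mu>2"
  define MB where "MB = \<nu>1 \<Otimes>\<^sub>M \<nu>2"
  define MC where "MC = \<nu>1 \<Otimes>\<^sub>M \<mu>2"
  have PA: "prob_space MA" and PB: "prob_space MB" and PC: "prob_space MC"
    unfolding MA_def MB_def MC_def by (fact A.prob_space_axioms B.prob_space_axioms C.prob_space_axioms)+
  have hA: "h \<in> borel_measurable MA" and hB: "h \<in> borel_measurable MB" and hC: "h \<in> borel_measurable MC"
    unfolding h_def MA_def MB_def MC_def by measurable
  have momA: "integrable MA (\<lambda>z. norm (h z) powr \<alpha>)"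
    using moment_pair_affine[OF P1 P2 id(1) id(3) mm1 mm2 a00, of a b] unfolding MA_def h_def by simp
  have momB: "integrable MB (\<lambda>z. norm (h z) powr \<alpha>)"
    using moment_pair_affine[OF Q1 Q2 id(2) id(4) mn1 mn2 a00, of a b] unfolding MB_def h_def by simp
  have momC: "integrable MC (\<lambda>z. norm (h z) powr \<alpha>)"
    using moment_pair_affine[OF Q1 P2 id(2) id(3) mn1 mm2 a00, of a b] unfolding MC_def h_def by simp
  define J where "J = (\<lambda>X Y. Jint \<alpha> X h Y h)"
  have symJ: "J Y X = J X Y" if "prob_space X" "prob_space Y" "h \<in> borel_measurable X" "h \<in> borel_measurable Y" for X Y
    unfolding J_def using Jint_sym[OF that(2,1,4,3)] by simp
  define sg :: real where "sg = (-1) ^ (k + 1)"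
  define X where "X = sg * (J MA MA - 2 * J MA MC + J MC MC)"
  define Y where "Y = sg * (J MC MC - 2 * J MC MB + J MB MB)"
  define Z where "Z = sg * (J MA MC - J MA MB - J MC MC + J MC MB)"
  have Xle: "X \<le> a powr \<alpha> * energy_sq \<alpha> \<mu>1 \<nu>1"
    using contraction[OF a0 P1 Q1 P2 S1 T1 S2 mm1 mn1 mm2 em1 kl1, of a b] ap
    unfolding X_def sg_def k_def J_def h_def MA_def MC_def by simp
  have Yle: "Y \<le> b powr \<alpha> * energy_sq \<alpha> \<mu>2 \<nu>2"
  proof -
    have sw1: "J MC MC = Jint \<alpha> (\<mu>2 \<Otimes>\<^sub>M \<nu>1) h' (\<mu>2 \<Otimes>\<^sub>M \<nu>1) h'"
      unfolding J_def MC_def h_def h'_def by (rule Jint_pair_swap[OF Q1 P2 Q1 P2 T1 S2 T1 S2])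
    have sw2: "J MC MB = Jint \<alpha> (\<mu>2 \<Otimes>\<^sub>M \<nu>1) h' (\<nu>2 \<Otimes>\<^sub>M \<nu>1) h'"
      unfolding J_def MC_def MB_def h_def h'_def by (rule Jint_pair_swap[OF Q1 P2 Q1 Q2 T1 S2 T1 T2])
    have sw3: "J MB MB = Jint \<alpha> (\<nu>2 \<Otimes>\<^sub>M \<nu>1) h' (\<nu>2 \<Otimes>\<^sub>M \<nu>1) h'"
      unfolding J_def MB_def h_def h'_def by (rule Jint_pair_swap[OF Q1 Q2 Q1 Q2 T1 T2 T1 T2])
    show ?thesis
      using contraction[OF a0 P2 Q2 Q1 S2 T2 T1 mm2 mn2 mn1 em2 kl2, of b a] bp
      unfolding Y_def sw1 sw2 sw3 sg_def k_def h'_def by simp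
  qed
  \<comment> \<open>positive semidefiniteness gives the quadratic form\<close>
  have quad: "0 \<le> s^2 * X + 2 * s * t * Z + t^2 * Y" for s t
  proof -
    define M3 where "M3 = (\<lambda>i::nat. if i = 0 then MA else if i = 1 then MB else MC)"
    define c3 where "c3 = (\<lambda>i::nat. if i = 0 then s else if i = 1 then - t else t - s)"
    define S3 where "S3 = {0, 1, 2::nat}"
    have PS: "prob_space (M3 i)" for i unfolding M3_def using PA PB PC by auto
    have MF: "h \<in> borel_measurable (M3 i)" for i unfolding M3_def using hA hB hC by auto
    have MO: "integrable (M3 i) (\<lambda>x. norm (h x) powr \<alpha>)" for i unfolding M3_def using momA momB momC by auto
    have AN: "(\<Sum>i\<in>S3. c3 i * (\<integral>x. p (h x) \<partial>M3 i)) = 0" if p: "mpoly_le (nat \<lfloor>\<alpha> / 2\<rfloor>) p" for p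
    proof -
      have pk: "mpoly_le k p" using p unfolding k_def .
      have e1: "(\<integral>x. p (h x) \<partial>MA) = (\<integral>x. p (h x) \<partial>MC)"
        unfolding MA_def MC_def h_def
        by (rule conv_mom1[OF P1 Q1 P2 S1 T1 S2 mm1 mn1 mm2 em1 _ ka pk]) (use kl1 k_def in simp)
      have e2: "(\<integral>x. p (h x) \<partial>MC) = (\<integral>x. p (h x) \<partial>MB)"
        unfolding MB_def MC_def h_def
        by (rule conv_mom2[OF P2 Q2 Q1 S2 T2 T1 mm2 mn2 mn1 em2 _ ka pk]) (use kl2 k_def in simp)
      show ?thesis unfolding S3_def c3_def M3_def using e1 e2 by (simp add: algebra_simps)
    qed
    have psd: "0 \<le> (-1) ^ (nat \<lfloor>\<alpha> / 2\<rfloor> + 1) * (\<Sum>i\<in>S3. \<Sum>j\<in>S3. c3 i * c3 j * J (M3 i) (M3 j))"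
      unfolding J_def by (rule energy_psd[OF a0 _ PS MF MO AN]) (simp add: S3_def)
    have sBA: "J MB MA = J MA MB" by (rule symJ[OF PA PB hA hB])
    have sCA: "J MC MA = J MA MC" by (rule symJ[OF PA PC hA hC])
    have sCB: "J MB MC = J MC MB" by (rule symJ[OF PC PB hC hB])
    have "(\<Sum>i\<in>S3. \<Sum>j\<in>S3. c3 i * c3 j * J (M3 i) (M3 j)) =
        s * s * J MA MA + t * t * J MB MB + (t - s) * (t - s) * J MC MC - 2 * s * t * J MA MB
        + 2 * s * (t - s) * J MA MC - 2 * t * (t - s) * J MC MB"
      unfolding S3_def c3_def M3_def using sBA sCA sCB by (simp add: algebra_simps)
    then have "0 \<le> sg * (s * s * J MA MA + t * t * J MB MB + (t - s) * (t - s) * J MC MC - 2 * s * t * J MA MB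
        + 2 * s * (t - s) * J MA MC - 2 * t * (t - s) * J MC MB)"
      using psd unfolding sg_def k_def by simp
    also have "\<dots> = s^2 * X + 2 * s * t * Z + t^2 * Y"
      unfolding X_def Y_def Z_def by (simp add: algebra_simps power2_eq_square)
    finally show ?thesis .
  qed
  have tri: "sqrt (X + 2 * Z + Y) \<le> sqrt X + sqrt Y" by (rule tri_quad[OF quad])
  have eAB: "energy_int \<alpha> (conv_comb lam \<mu>1 \<mu>2) (conv_comb lam \<nu>1 \<nu>2) = J MA MB"
    unfolding cc J_def MA_def MB_def by (rule energy_int_distr[OF PA[unfolded MA_def] PB[unfolded MB_def]]) (use hA hB in \<open>simp_all add: MA_def MB_def\<close>)
  have eAA: "energy_int \<alpha> (conv_comb lam \<mu>1 \<mu>2) (conv_comb lam \<mu>1 \<mu>2) = J MA MA"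
    unfolding cc J_def MA_def by (rule energy_int_distr[OF PA[unfolded MA_def] PA[unfolded MA_def]]) (use hA in \<open>simp_all add: MA_def\<close>)
  have eBB: "energy_int \<alpha> (conv_comb lam \<nu>1 \<nu>2) (conv_comb lam \<nu>1 \<nu>2) = J MB MB"
    unfolding cc J_def MB_def by (rule energy_int_distr[OF PB[unfolded MB_def] PB[unfolded MB_def]]) (use hB in \<open>simp_all add: MB_def\<close>)
  have eq: "energy_sq \<alpha> (conv_comb lam \<mu>1 \<mu>2) (conv_comb lam \<nu>1 \<nu>2) = X + 2 * Z + Y"
    unfolding energy_sq_def eAB eAA eBB X_def Y_def Z_def sg_def k_def[symmetric] by (simp add: algebra_simps)
  have "energy_dist \<alpha> (conv_comb lam \<mu>1 \<mu>2) (conv_comb lam \<nu>1 \<nu>2) = sqrt (X + 2 * Z + Y)"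
    unfolding energy_dist_def eq ..
  also have "\<dots> \<le> sqrt X + sqrt Y" by (rule tri)
  also have "\<dots> \<le> sqrt (a powr \<alpha> * energy_sq \<alpha> \<mu>1 \<nu>1) + sqrt (b powr \<alpha> * energy_sq \<alpha> \<mu>2 \<nu>2)"
    using Xle Yle by (intro add_mono real_sqrt_le_mono)
  also have "\<dots> = a powr (\<alpha> / 2) * energy_dist \<alpha> \<mu>1 \<nu>1 + b powr (\<alpha> / 2) * energy_dist \<alpha> \<mu>2 \<nu>2"
    unfolding energy_dist_def using sqrt_powr_mult[OF ap E1] sqrt_powr_mult[OF bp E2] by simp
  also have "\<dots> \<le> a * energy_dist \<alpha> \<mu>1 \<nu>1 + b * energy_dist \<alpha> \<mu>2 \<nu>2"
  proof (intro add_mono mult_right_mono)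
    have "a powr (\<alpha> / 2) \<le> a powr 1" using assms(1) ap a1 by (intro powr_mono') auto
    then show "a powr (\<alpha> / 2) \<le> a" using ap by simp
    have "b powr (\<alpha> / 2) \<le> b powr 1" using assms(1) bp b1 by (intro powr_mono') auto
    then show "b powr (\<alpha> / 2) \<le> b" using bp by simp
    show "0 \<le> energy_dist \<alpha> \<mu>1 \<nu>1" "0 \<le> energy_dist \<alpha> \<mu>2 \<nu>2"
      unfolding energy_dist_def using E1 E2 by simp_all
  qed
  finally show ?thesis unfolding a_def b_def .
qed

end
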